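(* Consider any economy $\mathcal{E}$ (as in the context) such that either (1) in every state, all firms have the same ranking of workers (firms have possibly state-specific assortative preferences), or (2) $\mathcal{E}$ satisfies the SPC*. Then, considering Bayesian Nash equilibria in which firms report truthfully, $\mathcal{E}$ has a unique BNE outcome, namely the one that yields in each state $\theta$ the unique stable matching (for the true preferences) of $\mathcal{M}(\theta)$.
   Context: Matching market: $\mathcal{M}=(F,W,U)$ with finite firms $F=\{f_i\}_{i\in[m]}$, finite workers $W=\{w_j\}_{j\in[n]}$, utilities $u^f_{ij}$ of firm $f_i$ from worker $w_j$ and $u^w_{ij}$ of worker $w_j$ from firm $f_i$; unmatched utility is $0$; all preferences strict; all pairs mutually acceptable (all match utilities $>0$). An economy is $\mathcal{E}=(F,W,\{U(\theta)\}_{\theta\in\Theta},\Theta,\Psi)$ with finite $\Theta$, full-support prior $\Psi$, market $\mathcal{M}(\theta)=(F,W,U(\theta))$ in state $\theta$; workers' utilities are state-independent, firms' may depend on $\theta$. Standing assumption: each $\mathcal{M}(\theta)$ has a unique stable matching. Game: $\theta$ drawn by $\Psi$; firms observe $\theta$; each worker knows only his own preferences; all simultaneously submit rank-ordered lists of acceptable partners; firm-proposing Deferred Acceptance is run on the reports. Firms report truthfully; a worker's strategy is one rank-ordered list; a BNE is a profile where each worker's list maximizes his expected utility under $\Psi$. The outcome of a BNE is the matching produced in each state. Sub-market of $(F,W,U)$: $(F',W',U')$ with $F'\subseteq F$, $W'\subseteq W$, $U'$ the restriction of $U$. $(f,w)$ is a top-top match of a sub-market if $w$ is $f$'s favorite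 worker in it and $f$ is $w$'s favorite firm in it. A market satisfies the Sequential Preference Condition (SPC) if there are orderings $f_1,\dots,f_m$ of the firms and $w_1,\dots,w_n$ of the workers such that for each $i\le\min(m,n)$, $(f_i,w_i)$ is a top-top match of the sub-market induced by $\{f_j,w_j\}_{j\ge i}$; $(f_i,w_i)$ and its agents are said to have order $i$. An economy satisfies the SPC if each $\mathcal{M}(\theta)$ does, with possibly state-specific orderings $f_{1|\theta},\dots,f_{m|\theta}$ and $w_{1|\theta},\dots,w_{n|\theta}$. An economy satisfies the SPC* if it satisfies the SPC and for every state $\theta$, every $i\le\min(m,n)$ and every firm $f$: if $w_{i|\theta}$ strictly prefers $f$ to $f_{i|\theta}$, then for every state $\theta'$ there is $i'<i$ (possibly depending on $\theta'$) with $f=f_{i'|\theta'}$. *)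

theory Defs
  imports Complex_Main
begin

text \<open>A matching between firms F and workers W is represented as a partial function
  from workers to firms (None = unmatched), injective on matched workers.\<close>

definition is_matching :: "'f set \<Rightarrow> 'w set \<Rightarrow> ('w \<Rightarrow> 'f option) \<Rightarrow> bool" where
  "is_matching F W \<mu> \<longleftrightarrow>
     (\<forall>w f. \<mu> w = Some f \<longrightarrow> w \<in> W \<and> f \<in> F) \<and>
     (\<forall>w1 w2 f. \<mu> w1 = Some f \<longrightarrow> \<mu> w2 = Some f \<longrightarrow> w1 = w2)"

definition wutil :: "('w \<Rightarrow> 'f \<Rightarrow> real) \<Rightarrow> 'w \<Rightarrow> 'f option \<Rightarrow> real" where
  "wutil uw w p = (case p of None \<Rightarrow> 0 | Some f \<Rightarrow> uw w f)"

definition futil :: "('f \<Rightarrow> 'w \<Rightarrow> real) \<Rightarrow> ('w \<Rightarrow> 'f option) \<Rightarrow> 'f \<Rightarrow> real" where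
  "futil uf \<mu> f = (if \<exists>w. \<mu> w = Some f then uf f (THE w. \<mu> w = Some f) else 0)"

definition stable_matching ::
  "'f set \<Rightarrow> 'w set \<Rightarrow> ('f \<Rightarrow> 'w \<Rightarrow> real) \<Rightarrow> ('w \<Rightarrow> 'f \<Rightarrow> real) \<Rightarrow> ('w \<Rightarrow> 'f option) \<Rightarrow> bool" where
  "stable_matching F W uf uw \<mu> \<longleftrightarrow>
     is_matching F W \<mu> \<and>
     (\<forall>w f. \<mu> w = Some f \<longrightarrow> uf f w \<ge> 0 \<and> uw w f \<ge> 0) \<and>
     (\<forall>f\<in>F. \<forall>w\<in>W. \<mu> w \<noteq> Some f \<longrightarrow>
        \<not> (uw w f > wutil uw w (\<mu> w) \<and> uf f w > futil uf \<mu> f))"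

definition rank_list :: "('a \<Rightarrow> real) \<Rightarrow> 'a set \<Rightarrow> 'a list" where
  "rank_list u S = (THE L. distinct L \<and> set L = S \<and> sorted_wrt (\<lambda>a b. u a > u b) L)"

definition valid_list :: "'f set \<Rightarrow> 'f list \<Rightarrow> bool" where
  "valid_list F L \<longleftrightarrow> distinct L \<and> set L \<subseteq> F"

text \<open>Simultaneous-round firm-proposing DA. The state is the set Rej of pairs (f,w)
  such that w has rejected f. Each firm proposes to the first worker in its list
  that has not rejected it; each worker holds the proposer ranked highest in her list
  (proposers not on her list are unacceptable) and rejects all other proposers.\<close>

definition da_target :: "('f \<Rightarrow> 'w list) \<Rightarrow> ('f \<times> 'w) set \<Rightarrow> 'f \<Rightarrow> 'w option" where
  "da_target pf Rej f = find (\<lambda>w. (f, w) \<notin> Rej) (pf f)"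

definition da_held ::
  "'f set \<Rightarrow> ('f \<Rightarrow> 'w list) \<Rightarrow> ('w \<Rightarrow> 'f list) \<Rightarrow> ('f \<times> 'w) set \<Rightarrow> 'w \<Rightarrow> 'f option" where
  "da_held F pf pw Rej w = find (\<lambda>f. f \<in> F \<and> da_target pf Rej f = Some w) (pw w)"

definition da_step ::
  "'f set \<Rightarrow> ('f \<Rightarrow> 'w list) \<Rightarrow> ('w \<Rightarrow> 'f list) \<Rightarrow> ('f \<times> 'w) set \<Rightarrow> ('f \<times> 'w) set" where
  "da_step F pf pw Rej =
     Rej \<union> {(f, w). f \<in> F \<and> da_target pf Rej f = Some w \<and> da_held F pf pw Rej w \<noteq> Some f}"

text \<open>Each non-final round adds a new rejected pair in F x W, so card F * card W + 1
  rounds suffice to reach the fixed point; the outcome matches each worker to the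
  firm she holds at the end.\<close>
definition DA ::
  "'f set \<Rightarrow> 'w set \<Rightarrow> ('f \<Rightarrow> 'w list) \<Rightarrow> ('w \<Rightarrow> 'f list) \<Rightarrow> 'w \<Rightarrow> 'f option" where
  "DA F W pf pw =
     (let R = (da_step F pf pw ^^ (card F * card W + 1)) {}
      in (\<lambda>w. if w \<in> W then da_held F pf pw R w else None))"

definition game_outcome ::
  "'f set \<Rightarrow> 'w set \<Rightarrow> ('s \<Rightarrow> 'f \<Rightarrow> 'w \<Rightarrow> real) \<Rightarrow> 's \<Rightarrow> ('w \<Rightarrow> 'f list) \<Rightarrow> 'w \<Rightarrow> 'f option" where
  "game_outcome F W uf \<theta> \<sigma> = DA F W (\<lambda>f. rank_list (uf \<theta> f) W) \<sigma>"

definition expected_utility ::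
  "'f set \<Rightarrow> 'w set \<Rightarrow> ('s \<Rightarrow> 'f \<Rightarrow> 'w \<Rightarrow> real) \<Rightarrow> ('w \<Rightarrow> 'f \<Rightarrow> real) \<Rightarrow> 's set \<Rightarrow> ('s \<Rightarrow> real)
     \<Rightarrow> ('w \<Rightarrow> 'f list) \<Rightarrow> 'w \<Rightarrow> real" where
  "expected_utility F W uf uw \<Theta> \<Psi> \<sigma> w =
     (\<Sum>\<theta>\<in>\<Theta>. \<Psi> \<theta> * wutil uw w (game_outcome F W uf \<theta> \<sigma> w))"

definition is_BNE ::
  "'f set \<Rightarrow> 'w set \<Rightarrow> ('s \<Rightarrow> 'f \<Rightarrow> 'w \<Rightarrow> real) \<Rightarrow> ('w \<Rightarrow> 'f \<Rightarrow> real) \<Rightarrow> 's set \<Rightarrow> ('s \<Rightarrow> real)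
     \<Rightarrow> ('w \<Rightarrow> 'f list) \<Rightarrow> bool" where
  "is_BNE F W uf uw \<Theta> \<Psi> \<sigma> \<longleftrightarrow>
     (\<forall>w\<in>W. valid_list F (\<sigma> w)) \<and>
     (\<forall>w\<in>W. \<forall>L. valid_list F L \<longrightarrow>
        expected_utility F W uf uw \<Theta> \<Psi> (\<sigma>(w := L)) w \<le> expected_utility F W uf uw \<Theta> \<Psi> \<sigma> w)"

definition assortative_firms :: "'f set \<Rightarrow> 'w set \<Rightarrow> ('s \<Rightarrow> 'f \<Rightarrow> 'w \<Rightarrow> real) \<Rightarrow> 's set \<Rightarrow> bool" where
  "assortative_firms F W uf \<Theta> \<longleftrightarrow>
     (\<forall>\<theta>\<in>\<Theta>. \<forall>f1\<in>F. \<forall>f2\<in>F. \<forall>w1\<in>W. \<forall>w2\<in>W.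
        uf \<theta> f1 w1 > uf \<theta> f1 w2 \<longleftrightarrow> uf \<theta> f2 w1 > uf \<theta> f2 w2)"

definition top_top ::
  "('f \<Rightarrow> 'w \<Rightarrow> real) \<Rightarrow> ('w \<Rightarrow> 'f \<Rightarrow> real) \<Rightarrow> 'f set \<Rightarrow> 'w set \<Rightarrow> 'f \<Rightarrow> 'w \<Rightarrow> bool" where
  "top_top uf uw F' W' f w \<longleftrightarrow>
     f \<in> F' \<and> w \<in> W' \<and>
     (\<forall>w'\<in>W'. w' \<noteq> w \<longrightarrow> uf f w' < uf f w) \<and>
     (\<forall>f'\<in>F'. f' \<noteq> f \<longrightarrow> uw w f' < uw w f)"

text \<open>Orderings f_1..f_m (ordF 1 .. ordF m) and w_1..w_n witnessing the SPC of a market.\<close>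
definition SPC_orderings ::
  "'f set \<Rightarrow> 'w set \<Rightarrow> ('f \<Rightarrow> 'w \<Rightarrow> real) \<Rightarrow> ('w \<Rightarrow> 'f \<Rightarrow> real) \<Rightarrow> (nat \<Rightarrow> 'f) \<Rightarrow> (nat \<Rightarrow> 'w) \<Rightarrow> bool" where
  "SPC_orderings F W uf uw ordF ordW \<longleftrightarrow>
     bij_betw ordF {1..card F} F \<and> bij_betw ordW {1..card W} W \<and>
     (\<forall>i\<in>{1..min (card F) (card W)}.
        top_top uf uw (ordF ` {i..card F}) (ordW ` {i..card W}) (ordF i) (ordW i))"

definition SPC_star ::
  "'f set \<Rightarrow> 'w set \<Rightarrow> ('s \<Rightarrow> 'f \<Rightarrow> 'w \<Rightarrow> real) \<Rightarrow> ('w \<Rightarrow> 'f \<Rightarrow> real) \<Rightarrow> 's set \<Rightarrow> bool" where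
  "SPC_star F W uf uw \<Theta> \<longleftrightarrow>
     (\<exists>ordF :: 's \<Rightarrow> nat \<Rightarrow> 'f. \<exists>ordW :: 's \<Rightarrow> nat \<Rightarrow> 'w.
        (\<forall>\<theta>\<in>\<Theta>. SPC_orderings F W (uf \<theta>) uw (ordF \<theta>) (ordW \<theta>)) \<and>
        (\<forall>\<theta>\<in>\<Theta>. \<forall>i\<in>{1..min (card F) (card W)}. \<forall>f\<in>F.
           uw (ordW \<theta> i) f > uw (ordW \<theta> i) (ordF \<theta> i) \<longrightarrow>
           (\<forall>\<theta>'\<in>\<Theta>. \<exists>i'\<in>{1..<i}. f = ordF \<theta>' i')))"

end

theory Submission
  imports Defs
begin


definition idx :: "'a list \<Rightarrow> 'a \<Rightarrow> nat" where
  "idx xs a = length (takeWhile (\<lambda>x. x \<noteq> a) xs)"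

lemma idx_nth: "a \<in> set xs \<Longrightarrow> idx xs a < length xs \<and> xs ! idx xs a = a"
  unfolding idx_def
proof (induction xs)
  case Nil then show ?case by simp
next
  case (Cons y ys) then show ?case by (cases "y = a") auto
qed

lemma idx_of_nth: "distinct xs \<Longrightarrow> i < length xs \<Longrightarrow> idx xs (xs ! i) = i"
  unfolding idx_def
proof (induction xs arbitrary: i)
  case Nil then show ?case by simp
next
  case (Cons y ys) then show ?case
    by (cases i) (auto simp: nth_mem)
qed

lemma idx_le_nth: "i < length xs \<Longrightarrow> idx xs (xs ! i) \<le> i"
  unfolding idx_def
proof (induction xs arbitrary: i)
  case Nil then show ?case by simp
next
  case (Cons y ys) then show ?case
    by (cases i) auto
qed

lemma idx_inj: "a \<in> set xs \<Longrightarrow> b \<in> set xs \<Longrightarrow> idx xs a = idx xs b \<Longrightarrow> a = b"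
  by (metis idx_nth)

lemma find_SomeD:
  assumes "find P xs = Some x"
  shows "x \<in> set xs \<and> P x \<and> (\<forall>y\<in>set xs. P y \<longrightarrow> idx xs x \<le> idx xs y)"
proof -
  from assms obtain i where i: "i < length xs" "P (xs ! i)" "xs ! i = x" "\<forall>j<i. \<not> P (xs ! j)"
    by (auto simp: find_Some_iff)
  have "x \<in> set xs" using i by auto
  moreover have "\<forall>y\<in>set xs. P y \<longrightarrow> idx xs x \<le> idx xs y"
  proof (intro ballI impI)
    fix y assume y: "y \<in> set xs" "P y"
    have "\<not> idx xs y < i" using i(4) y idx_nth[OF y(1)] by metis
    moreover have "idx xs x \<le> i" using idx_le_nth[OF i(1)] i(3) by simp
    ultimately show "idx xs x \<le> idx xs y" by simp
  qed
  ultimately show ?thesis using i by auto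
qed

lemma find_NoneD: "find P xs = None \<Longrightarrow> y \<in> set xs \<Longrightarrow> \<not> P y"
  by (auto simp: find_None_iff)

lemma find_SomeI:
  assumes "x \<in> set xs" "P x" "\<forall>y\<in>set xs. P y \<longrightarrow> idx xs x \<le> idx xs y"
  shows "find P xs = Some x"
proof (cases "find P xs")
  case None then show ?thesis using assms find_NoneD by metis
next
  case (Some z)
  from find_SomeD[OF Some] have "z \<in> set xs" "P z" "\<forall>y\<in>set xs. P y \<longrightarrow> idx xs z \<le> idx xs y" by auto
  then have "idx xs z = idx xs x" using assms by (meson le_antisym)
  then show ?thesis using Some idx_inj assms \<open>z \<in> set xs\<close> by metis
qed

lemma find_filter_eq:
  assumes "\<forall>x. P x \<longrightarrow> Q x"
  shows "find P (filter Q xs) = find P xs"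
  using assms by (induction xs) auto

lemma rank_list_ex:
  fixes u :: "'a::linorder \<Rightarrow> real"
  assumes "finite S" "inj_on u S"
  shows "\<exists>L. distinct L \<and> set L = S \<and> sorted_wrt (\<lambda>a b. u a > u b) L"
proof -
  define L where "L = sort_key (\<lambda>x. - u x) (sorted_list_of_set S)"
  have d: "distinct L" "set L = S" using assms by (auto simp: L_def)
  have s: "sorted (map (\<lambda>x. - u x) L)" by (simp add: L_def)
  have "sorted_wrt (\<lambda>a b. u a > u b) L"
    unfolding sorted_wrt_iff_nth_less
  proof (intro allI impI)
    fix i j assume ij: "i < j" "j < length L"
    have "- u (L ! i) \<le> - u (L ! j)" using s ij
      by (auto simp: sorted_iff_nth_mono)
    moreover have "L ! i \<noteq> L ! j" using d(1) ij by (simp add: nth_eq_iff_index_eq)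
    moreover have "L ! i \<in> S" "L ! j \<in> S" using ij d(2) nth_mem by fastforce+
    ultimately show "u (L ! i) > u (L ! j)" using assms(2) by (smt (verit) inj_on_def)
  qed
  then show ?thesis using d by blast
qed

lemma strict_sorted_unique:
  fixes u :: "'a \<Rightarrow> real"
  assumes "distinct L1" "set L1 = S" "sorted_wrt (\<lambda>a b. u a > u b) L1"
    "distinct L2" "set L2 = S" "sorted_wrt (\<lambda>a b. u a > u b) L2" "inj_on u S"
  shows "L1 = L2"
proof -
  have a: "sorted (rev (map u L1))" "distinct (rev (map u L1))"
    using assms(1,2,3,7) by (auto simp: sorted_wrt_map sorted_wrt_rev distinct_map intro: sorted_wrt_mono_rel[of _ "\<lambda>a b. u a > u b"] inj_on_subset)
  have b: "sorted (rev (map u L2))" "distinct (rev (map u L2))"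
    using assms(4,5,6,7) by (auto simp: sorted_wrt_map sorted_wrt_rev distinct_map intro: sorted_wrt_mono_rel[of _ "\<lambda>a b. u a > u b"] inj_on_subset)
  have "rev (map u L1) = rev (map u L2)"
    using sorted_distinct_set_unique[OF a(1) a(2) b(1) b(2)] assms(2,5) by simp
  then have "map u L1 = map u L2" by simp
  then show ?thesis using inj_on_map_eq_map[of u L1 L2] assms(2,5,7) by simp
qed


lemma rank_list_props:
  fixes u :: "'a \<Rightarrow> real"
  assumes "finite S" "inj_on u S"
  shows "distinct (rank_list u S) \<and> set (rank_list u S) = S \<and> sorted_wrt (\<lambda>a b. u a > u b) (rank_list u S)"
proof -
  have "\<exists>!L. distinct L \<and> set L = S \<and> sorted_wrt (\<lambda>a b. u a > u b) L"
  proof -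
    have "\<exists>L. distinct L \<and> set L = S \<and> sorted_wrt (\<lambda>a b. u a > u b) L"
    proof -
      obtain r :: "'a \<Rightarrow> nat" where r: "inj_on r S"
        using assms(1) finite_imp_inj_to_nat_seg by blast
      define L0 where "L0 = sort_key (\<lambda>x. - u x) (map (the_inv_into S r) (sorted_list_of_set (r ` S)))"
      have sL: "set (map (the_inv_into S r) (sorted_list_of_set (r ` S))) = S"
        using assms(1) r by (auto simp: the_inv_into_f_f image_iff)
      have dL: "distinct (map (the_inv_into S r) (sorted_list_of_set (r ` S)))"
        using assms(1) r by (auto simp: distinct_map inj_on_the_inv_into)
      have d: "distinct L0" "set L0 = S" using sL dL by (auto simp: L0_def)
      have s: "sorted (map (\<lambda>x. - u x) L0)" by (simp add: L0_def)
      have "sorted_wrt (\<lambda>a b. u a > u b) L0"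
        unfolding sorted_wrt_iff_nth_less
      proof (intro allI impI)
        fix i j assume ij: "i < j" "j < length L0"
        have "- u (L0 ! i) \<le> - u (L0 ! j)" using s ij
          by (auto simp: sorted_iff_nth_mono)
        moreover have "L0 ! i \<noteq> L0 ! j" using d(1) ij by (simp add: nth_eq_iff_index_eq)
        moreover have "L0 ! i \<in> S" "L0 ! j \<in> S" using ij d(2) nth_mem by fastforce+
        ultimately show "u (L0 ! i) > u (L0 ! j)" using assms(2) by (smt (verit) inj_on_def)
      qed
      then show ?thesis using d by blast
    qed
    then show ?thesis using strict_sorted_unique[of _ S u] assms(2) by blast
  qed
  then show ?thesis unfolding rank_list_def by (rule theI')
qed

lemma rank_list_idx:
  fixes u :: "'a \<Rightarrow> real"
  assumes "finite S" "inj_on u S" "a \<in> S" "b \<in> S"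
  shows "idx (rank_list u S) a < idx (rank_list u S) b \<longleftrightarrow> u a > u b"
proof -
  let ?L = "rank_list u S"
  have P: "distinct ?L" "set ?L = S" "sorted_wrt (\<lambda>a b. u a > u b) ?L"
    using rank_list_props[OF assms(1,2)] by auto
  have ia: "idx ?L a < length ?L" "?L ! idx ?L a = a" using idx_nth[of a ?L] P(2) assms(3) by auto
  have ib: "idx ?L b < length ?L" "?L ! idx ?L b = b" using idx_nth[of b ?L] P(2) assms(4) by auto
  show ?thesis
  proof
    assume "idx ?L a < idx ?L b"
    then show "u a > u b" using P(3) ia ib unfolding sorted_wrt_iff_nth_less by metis
  next
    assume uab: "u a > u b"
    then have "a \<noteq> b" by auto
    then have "idx ?L a \<noteq> idx ?L b" using ia ib by metis
    moreover have "\<not> idx ?L b < idx ?L a" using P(3) ia ib uab unfolding sorted_wrt_iff_nth_less by (metis less_asym)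
    ultimately show "idx ?L a < idx ?L b" by simp
  qed
qed



definition run where "run F pf pw k = (da_step F pf pw ^^ k) {}"

lemma run_0[simp]: "run F pf pw 0 = {}" by (simp add: run_def)
lemma run_Suc: "run F pf pw (Suc k) = da_step F pf pw (run F pf pw k)" by (simp add: run_def)

lemma step_sup: "R \<subseteq> da_step F pf pw R" by (auto simp: da_step_def)

lemma run_mono: "k \<le> k' \<Longrightarrow> run F pf pw k \<subseteq> run F pf pw k'"
proof (induction k' )
  case 0 then show ?case by simp
next
  case (Suc k') then show ?case
    using step_sup[of "run F pf pw k'" F pf pw] by (auto simp: run_Suc le_Suc_eq)
qed

lemma target_SomeD:
  assumes "da_target pf R f = Some w"
  shows "w \<in> set (pf f) \<and> (f, w) \<notin> R \<and> (\<forall>w'\<in>set (pf f). idx (pf f) w' < idx (pf f) w \<longrightarrow> (f, w') \<in> R)"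
  using find_SomeD[OF assms[unfolded da_target_def]] by force

lemma target_NoneD:
  assumes "da_target pf R f = None" "w \<in> set (pf f)"
  shows "(f, w) \<in> R"
  using find_NoneD[OF assms(1)[unfolded da_target_def] assms(2)] by simp

lemma target_SomeI:
  assumes "w \<in> set (pf f)" "(f, w) \<notin> R" "\<forall>w'\<in>set (pf f). idx (pf f) w' < idx (pf f) w \<longrightarrow> (f, w') \<in> R"
  shows "da_target pf R f = Some w"
  unfolding da_target_def
  by (rule find_SomeI) (use assms in \<open>auto simp: not_le[symmetric]\<close>)

lemma held_SomeD:
  assumes "da_held F pf pw R w = Some f"
  shows "f \<in> F \<and> da_target pf R f = Some w \<and> f \<in> set (pw w) \<and>
     (\<forall>g\<in>set (pw w). g \<in> F \<and> da_target pf R g = Some w \<longrightarrow> idx (pw w) f \<le> idx (pw w) g)"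
  using find_SomeD[OF assms[unfolded da_held_def]] by auto

lemma held_NoneD:
  assumes "da_held F pf pw R w = None" "g \<in> set (pw w)" "g \<in> F"
  shows "da_target pf R g \<noteq> Some w"
  using find_NoneD[OF assms(1)[unfolded da_held_def] assms(2)] assms(3) by simp

lemma held_exists:
  assumes "g \<in> set (pw w)" "g \<in> F" "da_target pf R g = Some w"
  shows "\<exists>h. da_held F pf pw R w = Some h \<and> idx (pw w) h \<le> idx (pw w) g"
proof (cases "da_held F pf pw R w")
  case None then show ?thesis using held_NoneD assms by metis
next
  case (Some h) then show ?thesis using held_SomeD[OF Some] assms by blast
qed

lemma step_newD:
  assumes "(f, w) \<in> da_step F pf pw R" "(f, w) \<notin> R"
  shows "f \<in> F \<and> da_target pf R f = Some w \<and> da_held F pf pw R w \<noteq> Some f"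
  using assms by (auto simp: da_step_def)

lemma held_mono:
  assumes "da_held F pf pw R w = Some g"
  shows "\<exists>g'. da_held F pf pw (da_step F pf pw R) w = Some g' \<and> idx (pw w) g' \<le> idx (pw w) g"
proof -
  have h: "g \<in> F" "da_target pf R g = Some w" "g \<in> set (pw w)" using held_SomeD[OF assms] by auto
  have t: "w \<in> set (pf g)" "(g, w) \<notin> R" "\<forall>w'\<in>set (pf g). idx (pf g) w' < idx (pf g) w \<longrightarrow> (g, w') \<in> R"
    using target_SomeD[OF h(2)] by auto
  have "(g, w) \<notin> da_step F pf pw R" using t(2) assms by (auto simp: da_step_def)
  then have "da_target pf (da_step F pf pw R) g = Some w"
    using t step_sup[of R F pf pw] by (intro target_SomeI) auto
  then show ?thesis using held_exists h by metis
qed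

lemma held_mono_run:
  assumes "da_held F pf pw (run F pf pw k) w = Some g" "k \<le> k'"
  shows "\<exists>g'. da_held F pf pw (run F pf pw k') w = Some g' \<and> idx (pw w) g' \<le> idx (pw w) g"
  using assms(2)
proof (induction k')
  case 0 then show ?case using assms(1) by auto
next
  case (Suc k')
  show ?case
  proof (cases "k = Suc k'")
    case True then show ?thesis using assms(1) by auto
  next
    case False
    then obtain g' where "da_held F pf pw (run F pf pw k') w = Some g'" "idx (pw w) g' \<le> idx (pw w) g"
      using Suc by (auto simp: le_Suc_eq)
    then show ?thesis using held_mono[of F pf pw "run F pf pw k'" w g'] by (force simp: run_Suc)
  qed
qed

lemma target_mono:
  assumes "R \<subseteq> R'" "da_target pf R f = Some a" "da_target pf R' f = Some b"
  shows "idx (pf f) a \<le> idx (pf f) b"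
  using target_SomeD[OF assms(2)] target_SomeD[OF assms(3)] assms(1) by (meson not_le subsetD)

lemma rej_proposed:
  assumes "(f, w) \<in> run F pf pw k"
  shows "\<exists>k'<k. da_target pf (run F pf pw k') f = Some w"
  using assms
proof (induction k)
  case 0 then show ?case by simp
next
  case (Suc k)
  show ?case
  proof (cases "(f, w) \<in> run F pf pw k")
    case True then show ?thesis using Suc by (meson less_SucI)
  next
    case False then show ?thesis using step_newD[of f w F pf pw "run F pf pw k"] Suc.prems
      by (auto simp: run_Suc)
  qed
qed

lemma run_sub:
  assumes "\<forall>f\<in>F. set (pf f) \<subseteq> W"
  shows "run F pf pw k \<subseteq> F \<times> W"
proof (induction k)
  case 0 then show ?case by simp
next
  case (Suc k)
  show ?case
  proof
    fix p assume p: "p \<in> run F pf pw (Suc k)"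
    obtain f w where fw: "p = (f, w)" by force
    show "p \<in> F \<times> W"
    proof (cases "p \<in> run F pf pw k")
      case True then show ?thesis using Suc by auto
    next
      case False
      then have "f \<in> F \<and> da_target pf (run F pf pw k) f = Some w"
        using step_newD[of f w F pf pw "run F pf pw k"] p fw by (auto simp: run_Suc)
      then show ?thesis using target_SomeD[of pf _ f w] assms fw by auto
    qed
  qed
qed

lemma run_fix_stays:
  assumes "da_step F pf pw (run F pf pw k) = run F pf pw k" "k \<le> k'"
  shows "run F pf pw k' = run F pf pw k"
  using assms(2)
proof (induction k')
  case 0 then show ?case by simp
next
  case (Suc k') then show ?case using assms(1) by (cases "k = Suc k'") (auto simp: run_Suc le_Suc_eq)
qed

lemma run_fixpoint:
  assumes "finite F" "finite W" "\<forall>f\<in>F. set (pf f) \<subseteq> W"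
  shows "da_step F pf pw (run F pf pw (card F * card W + 1)) = run F pf pw (card F * card W + 1)"
proof (rule ccontr)
  let ?M = "card F * card W + 1"
  assume nf: "da_step F pf pw (run F pf pw ?M) \<noteq> run F pf pw ?M"
  have noks: "\<forall>k\<le>?M. da_step F pf pw (run F pf pw k) \<noteq> run F pf pw k"
  proof (intro allI impI)
    fix k assume k: "k \<le> ?M"
    show "da_step F pf pw (run F pf pw k) \<noteq> run F pf pw k"
    proof
      assume e: "da_step F pf pw (run F pf pw k) = run F pf pw k"
      have "run F pf pw ?M = run F pf pw k" using run_fix_stays[OF e k] .
      then show False using nf e by simp
    qed
  qed
  have fin: "finite (F \<times> W)" using assms by simp
  have "\<forall>k\<le>?M. card (run F pf pw k) \<ge> k"
  proof (intro allI impI)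
    fix k assume "k \<le> ?M"
    then show "card (run F pf pw k) \<ge> k"
    proof (induction k)
      case 0 then show ?case by simp
    next
      case (Suc k)
      have ne: "run F pf pw k \<subset> run F pf pw (Suc k)"
        using noks Suc.prems step_sup[of "run F pf pw k" F pf pw] by (auto simp: run_Suc)
      have "finite (run F pf pw (Suc k))" using run_sub[OF assms(3)] fin finite_subset by metis
      then have "card (run F pf pw k) < card (run F pf pw (Suc k))" using psubset_card_mono ne by blast
      then show ?case using Suc by simp
    qed
  qed
  then have "card (run F pf pw ?M) \<ge> ?M" by simp
  moreover have "card (run F pf pw ?M) \<le> card F * card W"
    using card_mono[OF fin run_sub[OF assms(3)]] by (simp add: card_cartesian_product)
  ultimately show False by simp
qed



definition rstable :: "'f set \<Rightarrow> 'w set \<Rightarrow> ('f \<Rightarrow> 'w \<Rightarrow> real) \<Rightarrow> ('w \<Rightarrow> 'f list) \<Rightarrow> ('w \<Rightarrow> 'f option) \<Rightarrow> bool" where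
  "rstable F W uf pw \<mu> \<longleftrightarrow> is_matching F W \<mu> \<and> (\<forall>w f. \<mu> w = Some f \<longrightarrow> f \<in> set (pw w)) \<and>
    (\<forall>f\<in>F. \<forall>w\<in>W. \<mu> w \<noteq> Some f \<longrightarrow> f \<in> set (pw w) \<longrightarrow>
       (\<forall>g. \<mu> w = Some g \<longrightarrow> idx (pw w) f < idx (pw w) g) \<longrightarrow> \<not> uf f w > futil uf \<mu> f)"

lemma futil_Some:
  assumes "is_matching F W \<mu>" "\<mu> w = Some f"
  shows "futil uf \<mu> f = uf f w"
proof -
  have "(THE w. \<mu> w = Some f) = w"
    using assms unfolding is_matching_def by (intro the_equality) auto
  then show ?thesis using assms(2) by (auto simp: futil_def)
qed

lemma futil_None:
  assumes "\<forall>w. \<mu> w \<noteq> Some f"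
  shows "futil uf \<mu> f = 0"
  using assms by (auto simp: futil_def)

lemma DA_eq: "DA F W pf pw w = (if w \<in> W then da_held F pf pw (run F pf pw (card F * card W + 1)) w else None)"
  by (simp add: DA_def run_def Let_def)

lemma fix_target_held:
  assumes "da_step F pf pw R = R" "f \<in> F" "da_target pf R f = Some w"
  shows "da_held F pf pw R w = Some f"
proof (rule ccontr)
  assume "da_held F pf pw R w \<noteq> Some f"
  then have "(f, w) \<in> da_step F pf pw R" using assms by (auto simp: da_step_def)
  then show False using assms target_SomeD[OF assms(3)] by auto
qed

lemma inv_rej:
  "\<forall>(f, w)\<in>run F pf pw k. f \<notin> set (pw w) \<or>
     (\<exists>g. da_held F pf pw (run F pf pw k) w = Some g \<and> idx (pw w) g < idx (pw w) f)"
proof (induction k)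
  case 0 then show ?case by simp
next
  case (Suc k)
  let ?R = "run F pf pw k"
  have "f \<notin> set (pw w) \<or> (\<exists>g. da_held F pf pw (run F pf pw (Suc k)) w = Some g \<and> idx (pw w) g < idx (pw w) f)"
    if fw0: "(f, w) \<in> run F pf pw (Suc k)" for f w
  proof (cases "f \<in> set (pw w)")
    case False then show ?thesis by simp
  next
    case True
    note fw = fw0 True
    have "\<exists>g. da_held F pf pw ?R w = Some g \<and> idx (pw w) g < idx (pw w) f"
    proof (cases "(f, w) \<in> ?R")
      case True then show ?thesis using Suc fw(2) by auto
    next
      case False
      then have n: "f \<in> F" "da_target pf ?R f = Some w" "da_held F pf pw ?R w \<noteq> Some f"
        using step_newD[of f w F pf pw ?R] fw by (auto simp: run_Suc)
      obtain h where h: "da_held F pf pw ?R w = Some h" "idx (pw w) h \<le> idx (pw w) f"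
        using held_exists[of f pw w F pf ?R, OF fw(2) n(1,2)] by blast
      have "h \<in> set (pw w)" using held_SomeD[OF h(1)] by auto
      then have "idx (pw w) h \<noteq> idx (pw w) f" using n(3) h(1) idx_inj fw(2) by metis
      then show ?thesis using h by auto
    qed
    then obtain g where "da_held F pf pw ?R w = Some g" "idx (pw w) g < idx (pw w) f" by blast
    then show ?thesis
      using held_mono[of F pf pw ?R w g] by (force simp: run_Suc)
  qed
  then show ?case by blast
qed

lemma DA_matching:
  "is_matching F W (DA F W pf pw)"
proof -
  have "\<And>w f. DA F W pf pw w = Some f \<Longrightarrow> w \<in> W \<and> f \<in> F \<and> da_target pf (run F pf pw (card F * card W + 1)) f = Some w"
    unfolding DA_eq using held_SomeD by (fastforce split: if_splits)
  then show ?thesis unfolding is_matching_def by (metis option.inject)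
qed

lemma DA_rstable:
  fixes uf :: "'f \<Rightarrow> 'w \<Rightarrow> real"
  assumes finF: "finite F" and finW: "finite W" and inj: "\<forall>f\<in>F. inj_on (uf f) W"
  shows "rstable F W uf pw (DA F W (\<lambda>f. rank_list (uf f) W) pw)"
proof -
  let ?pf = "\<lambda>f. rank_list (uf f) W"
  let ?M = "card F * card W + 1"
  let ?R = "run F ?pf pw ?M"
  let ?mu = "DA F W ?pf pw"
  have pfW: "\<forall>f\<in>F. set (?pf f) = W" using rank_list_props finW inj by blast
  have fixp: "da_step F ?pf pw ?R = ?R" using run_fixpoint[OF finF finW] pfW by auto
  have m: "is_matching F W ?mu" by (rule DA_matching)
  have ir: "\<forall>w f. ?mu w = Some f \<longrightarrow> f \<in> set (pw w)"
    unfolding DA_eq using held_SomeD by (metis option.distinct(1))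
  have nb: "\<not> uf f w > futil uf ?mu f"
    if f: "f \<in> F" and w: "w \<in> W" and ne: "?mu w \<noteq> Some f" and fl: "f \<in> set (pw w)"
      and bef: "\<forall>g. ?mu w = Some g \<longrightarrow> idx (pw w) f < idx (pw w) g" for f w
  proof
    assume bl: "uf f w > futil uf ?mu f"
    have rej: "(f, w) \<in> ?R"
    proof (cases "da_target ?pf ?R f")
      case None then show ?thesis using target_NoneD[OF None] pfW f w by auto
    next
      case (Some t)
      have tW: "t \<in> W" using target_SomeD[OF Some] pfW f by auto
      have "da_held F ?pf pw ?R t = Some f" using fix_target_held[OF fixp f Some] .
      then have mt: "?mu t = Some f" using tW by (simp add: DA_eq)
      then have "t \<noteq> w" using ne by auto
      have "futil uf ?mu f = uf f t" using futil_Some[OF m mt] .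
      then have "uf f w > uf f t" using bl by simp
      then have "idx (?pf f) w < idx (?pf f) t" using rank_list_idx[OF finW, of "uf f"] inj f w tW by blast
      then show ?thesis using target_SomeD[OF Some] pfW f w by auto
    qed
    then obtain g where g: "da_held F ?pf pw ?R w = Some g" "idx (pw w) g < idx (pw w) f"
      using inv_rej[of F ?pf pw ?M] fl by blast
    then have "?mu w = Some g" using w by (simp add: DA_eq)
    then show False using bef g(2) by force
  qed
  show ?thesis unfolding rstable_def using m ir nb by blast
qed

lemma inv_opt:
  fixes uf :: "'f \<Rightarrow> 'w \<Rightarrow> real"
  assumes finW: "finite W" and inj: "\<forall>f\<in>F. inj_on (uf f) W"
    and pos: "\<forall>f\<in>F. \<forall>w\<in>W. uf f w > 0"
    and nu: "rstable F W uf pw \<nu>"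
  shows "\<forall>(f, w)\<in>run F (\<lambda>f. rank_list (uf f) W) pw k. \<nu> w \<noteq> Some f"
proof (induction k)
  case 0 then show ?case by simp
next
  case (Suc k)
  let ?pf = "\<lambda>f. rank_list (uf f) W"
  let ?R = "run F ?pf pw k"
  have pfW: "\<forall>f\<in>F. set (?pf f) = W" using rank_list_props finW inj by blast
  have nm: "is_matching F W \<nu>" using nu by (simp add: rstable_def)
  show ?case
  proof (intro ballI, clarify)
    fix f w assume fw: "(f, w) \<in> run F ?pf pw (Suc k)" and nf: "\<nu> w = Some f"
    show False
    proof (cases "(f, w) \<in> ?R")
      case True then show ?thesis using Suc nf by auto
    next
      case False
      then have n: "f \<in> F" "da_target ?pf ?R f = Some w" "da_held F ?pf pw ?R w \<noteq> Some f"
        using step_newD[of f w F ?pf pw ?R] fw by (auto simp: run_Suc)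
      have fl: "f \<in> set (pw w)" using nu nf by (auto simp: rstable_def)
      have wW: "w \<in> W" using nm nf by (auto simp: is_matching_def)
      obtain g where g: "da_held F ?pf pw ?R w = Some g" "idx (pw w) g \<le> idx (pw w) f"
        using held_exists[of f pw w F ?pf ?R, OF fl n(1,2)] by blast
      have gp: "g \<in> F" "da_target ?pf ?R g = Some w" "g \<in> set (pw w)" using held_SomeD[OF g(1)] by auto
      have "g \<noteq> f" using g n(3) by auto
      then have gf: "idx (pw w) g < idx (pw w) f" using g(2) idx_inj gp(3) fl by (metis le_neq_implies_less)
      have "uf g w > futil uf \<nu> g"
      proof (cases "\<exists>u. \<nu> u = Some g")
        case True
        then obtain u where u: "\<nu> u = Some g" by blast
        have uW: "u \<in> W" using nm u by (auto simp: is_matching_def)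
        have "u \<noteq> w" using u nf \<open>g \<noteq> f\<close> by auto
        have "\<not> idx (?pf g) u < idx (?pf g) w"
        proof
          assume "idx (?pf g) u < idx (?pf g) w"
          then have "(g, u) \<in> ?R" using target_SomeD[OF gp(2)] pfW gp(1) uW by auto
          then show False using Suc u by auto
        qed
        moreover have "idx (?pf g) u \<noteq> idx (?pf g) w"
          using idx_inj[of u "?pf g" w] pfW gp(1) uW wW \<open>u \<noteq> w\<close> by auto
        ultimately have "idx (?pf g) w < idx (?pf g) u" by simp
        then have "uf g w > uf g u" using rank_list_idx[OF finW, of "uf g"] inj gp(1) uW wW by blast
        then show ?thesis using futil_Some[OF nm u] by simp
      next
        case False
        then show ?thesis using futil_None[of \<nu> g uf] pos gp(1) wW by auto
      qed
      moreover have "\<forall>h. \<nu> w = Some h \<longrightarrow> idx (pw w) g < idx (pw w) h" using nf gf by auto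
      moreover have "\<nu> w \<noteq> Some g" using nf \<open>g \<noteq> f\<close> by auto
      ultimately show False using nu gp(1,3) wW unfolding rstable_def by blast
    qed
  qed
qed

lemma DA_firm_opt:
  fixes uf :: "'f \<Rightarrow> 'w \<Rightarrow> real"
  assumes finF: "finite F" and finW: "finite W" and inj: "\<forall>f\<in>F. inj_on (uf f) W"
    and pos: "\<forall>f\<in>F. \<forall>w\<in>W. uf f w > 0"
    and nu: "rstable F W uf pw \<nu>" and f: "f \<in> F"
  shows "futil uf \<nu> f \<le> futil uf (DA F W (\<lambda>f. rank_list (uf f) W) pw) f"
proof -
  let ?pf = "\<lambda>f. rank_list (uf f) W"
  let ?M = "card F * card W + 1"
  let ?R = "run F ?pf pw ?M"
  let ?mu = "DA F W ?pf pw"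
  have pfW: "\<forall>f\<in>F. set (?pf f) = W" using rank_list_props finW inj by blast
  have fixp: "da_step F ?pf pw ?R = ?R" using run_fixpoint[OF finF finW] pfW by auto
  have m: "is_matching F W ?mu" by (rule DA_matching)
  have nm: "is_matching F W \<nu>" using nu by (simp add: rstable_def)
  have mu_nonneg: "futil uf ?mu f \<ge> 0"
  proof (cases "\<exists>u. ?mu u = Some f")
    case True
    then obtain u where u: "?mu u = Some f" by blast
    then have "u \<in> W" using m by (auto simp: is_matching_def)
    then show ?thesis using futil_Some[OF m u] pos f by force
  next
    case False then show ?thesis using futil_None[of ?mu f uf] by auto
  qed
  show ?thesis
  proof (cases "\<exists>u. \<nu> u = Some f")
    case False then show ?thesis using futil_None[of \<nu> f uf] mu_nonneg by auto
  next
    case True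
    then obtain u where u: "\<nu> u = Some f" by blast
    have uW: "u \<in> W" using nm u by (auto simp: is_matching_def)
    have nr: "(f, u) \<notin> ?R" using inv_opt[OF finW inj pos nu, of ?M] u by auto
    obtain t where t: "da_target ?pf ?R f = Some t"
      using target_NoneD[of ?pf ?R f u] nr pfW f uW by (cases "da_target ?pf ?R f") auto
    have tW: "t \<in> W" using target_SomeD[OF t] pfW f by auto
    have "\<not> idx (?pf f) u < idx (?pf f) t" using target_SomeD[OF t] nr pfW f uW by auto
    then have "\<not> uf f u > uf f t" using rank_list_idx[OF finW, of "uf f" u t] inj f uW tW by blast
    then have "uf f u \<le> uf f t" by simp
    moreover have "?mu t = Some f" using fix_target_held[OF fixp f t] tW by (simp add: DA_eq)
    ultimately show ?thesis using futil_Some[OF m] futil_Some[OF nm u] by metis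
  qed
qed



lemma step_cong:
  assumes "\<forall>u. da_held F pf pw R u = da_held F pf pw' R u"
  shows "da_step F pf pw R = da_step F pf pw' R"
  using assms unfolding da_step_def by simp

lemma run_coincide:
  assumes "\<forall>k<K. \<forall>u. da_held F pf pw (run F pf pw k) u = da_held F pf pw' (run F pf pw k) u"
  shows "k \<le> K \<Longrightarrow> run F pf pw' k = run F pf pw k"
proof (induction k)
  case 0 then show ?case by simp
next
  case (Suc k)
  then have "run F pf pw' k = run F pf pw k" by simp
  then show ?case using step_cong[of F pf pw "run F pf pw k" pw'] assms Suc.prems
    by (simp add: run_Suc)
qed

lemma idx_append: "idx (xs @ ys) a = (if a \<in> set xs then idx xs a else length xs + idx ys a)"
  unfolding idx_def by (induction xs) auto

lemma idx_Cons: "idx (x # xs) a = (if x = a then 0 else Suc (idx xs a))"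
  unfolding idx_def by simp

lemma find_skip: "\<forall>y\<in>set xs. \<not> P y \<Longrightarrow> find P (xs @ ys) = find P ys"
  by (induction xs) auto

definition dev_list :: "'f list \<Rightarrow> 'f \<Rightarrow> 'f list \<Rightarrow> 'f list" where
  "dev_list TB f L = TB @ [f] @ filter (\<lambda>h. h \<notin> set TB \<and> h \<noteq> f) L"

lemma held_dev_eq:
  assumes "\<forall>y\<in>set TB. da_target pf R y \<noteq> Some w" "da_target pf R f \<noteq> Some w"
  shows "da_held F pf (pw(w := dev_list TB f (pw w))) R u = da_held F pf pw R u"
proof (cases "u = w")
  case False then show ?thesis by (simp add: da_held_def)
next
  case True
  let ?P = "\<lambda>h. h \<in> F \<and> da_target pf R h = Some w"
  have "find ?P (TB @ [f] @ filter (\<lambda>h. h \<notin> set TB \<and> h \<noteq> f) (pw w))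
      = find ?P (filter (\<lambda>h. h \<notin> set TB \<and> h \<noteq> f) (pw w))"
    using assms by (subst append_assoc[symmetric], subst find_skip) auto
  also have "\<dots> = find ?P (pw w)" using assms by (intro find_filter_eq) auto
  finally show ?thesis using True by (simp add: da_held_def dev_list_def)
qed

lemma dev_outcome:
  assumes fF: "f \<in> F" and fTB: "f \<notin> set TB" and wW: "w \<in> W"
    and noB: "\<forall>k\<le>card F * card W + 1. \<forall>y\<in>set TB. da_target pf (run F pf pw k) y \<noteq> Some w"
  shows "(\<not> (\<exists>k\<le>card F * card W + 1. da_target pf (run F pf pw k) f = Some w) \<longrightarrow>
           DA F W pf (pw(w := dev_list TB f (pw w))) w = DA F W pf pw w) \<and>
         ((\<exists>k\<le>card F * card W + 1. da_target pf (run F pf pw k) f = Some w) \<longrightarrow>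
           (\<exists>h. DA F W pf (pw(w := dev_list TB f (pw w))) w = Some h \<and> (h \<in> set TB \<or> h = f)))"
proof -
  let ?M = "card F * card W + 1"
  let ?L = "dev_list TB f (pw w)"
  let ?pw' = "pw(w := ?L)"
  let ?Pr = "\<lambda>k. da_target pf (run F pf pw k) f = Some w"
  have A: "\<not> (\<exists>k\<le>?M. ?Pr k) \<longrightarrow> DA F W pf ?pw' w = DA F W pf pw w"
  proof
    assume n: "\<not> (\<exists>k\<le>?M. ?Pr k)"
    have he: "\<forall>k\<le>?M. \<forall>u. da_held F pf pw (run F pf pw k) u = da_held F pf ?pw' (run F pf pw k) u"
      using held_dev_eq noB n by metis
    have "run F pf ?pw' ?M = run F pf pw ?M" using run_coincide[of ?M F pf pw ?pw'] he by simp
    then show "DA F W pf ?pw' w = DA F W pf pw w" using he wW by (simp add: DA_eq)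
  qed
  have B: "(\<exists>k\<le>?M. ?Pr k) \<longrightarrow> (\<exists>h. DA F W pf ?pw' w = Some h \<and> (h \<in> set TB \<or> h = f))"
  proof
    assume "\<exists>k\<le>?M. ?Pr k"
    then obtain k where k: "k \<le> ?M" "?Pr k" by blast
    define k0 where "k0 = (LEAST k. ?Pr k)"
    have k0: "?Pr k0" "k0 \<le> k" using k LeastI[of ?Pr k] Least_le[of ?Pr k] by (auto simp: k0_def)
    have bef: "\<forall>j<k0. \<not> ?Pr j" using not_less_Least k0_def by blast
    have he: "\<forall>j<k0. \<forall>u. da_held F pf pw (run F pf pw j) u = da_held F pf ?pw' (run F pf pw j) u"
      using held_dev_eq noB bef k0(2) k(1) by (metis (no_types, lifting) le_trans less_imp_le)
    have r0: "run F pf ?pw' k0 = run F pf pw k0" using run_coincide[of k0 F pf pw ?pw'] he by simp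
    have fL: "f \<in> set (?pw' w)" by (simp add: dev_list_def)
    obtain h where h: "da_held F pf ?pw' (run F pf ?pw' k0) w = Some h" "idx (?pw' w) h \<le> idx (?pw' w) f"
      using held_exists[of f ?pw' w F pf "run F pf ?pw' k0"] fL fF k0(1) r0 by auto
    obtain h' where h': "da_held F pf ?pw' (run F pf ?pw' ?M) w = Some h'" "idx (?pw' w) h' \<le> idx (?pw' w) h"
      using held_mono_run[OF h(1), of ?M] k0(2) k(1) by auto
    have h'L: "h' \<in> set ?L" using held_SomeD[OF h'(1)] by simp
    have "h' \<in> set TB \<or> h' = f"
    proof (rule ccontr)
      assume c: "\<not> (h' \<in> set TB \<or> h' = f)"
      have "idx ?L f = length TB" using fTB by (simp add: dev_list_def idx_append idx_Cons)
      moreover have "idx ?L h' \<ge> Suc (length TB)" using c by (auto simp: dev_list_def idx_append idx_Cons)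
      ultimately show False using h(2) h'(2) by simp
    qed
    then show "\<exists>h. DA F W pf ?pw' w = Some h \<and> (h \<in> set TB \<or> h = f)" using h' wW by (simp add: DA_eq)
  qed
  show ?thesis using A B by blast
qed



lemma stable_rstable_T:
  fixes uf :: "'f \<Rightarrow> 'w \<Rightarrow> real" and uw :: "'w \<Rightarrow> 'f \<Rightarrow> real"
  assumes finF: "finite F" and injw: "\<forall>w\<in>W. inj_on (uw w) F"
    and uwpos: "\<forall>w\<in>W. \<forall>f\<in>F. uw w f > 0"
    and st: "stable_matching F W uf uw \<nu>"
  shows "rstable F W uf (\<lambda>w. rank_list (uw w) F) \<nu>"
proof -
  have m: "is_matching F W \<nu>" using st by (simp add: stable_matching_def)
  have T: "\<forall>w\<in>W. set (rank_list (uw w) F) = F" using rank_list_props[OF finF] injw by blast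
  have ir: "\<forall>w f. \<nu> w = Some f \<longrightarrow> f \<in> set (rank_list (uw w) F)"
    using m T unfolding is_matching_def by blast
  have nb: "\<not> uf f w > futil uf \<nu> f"
    if f: "f \<in> F" and w: "w \<in> W" and ne: "\<nu> w \<noteq> Some f"
      and bef: "\<forall>g. \<nu> w = Some g \<longrightarrow> idx (rank_list (uw w) F) f < idx (rank_list (uw w) F) g" for f w
  proof -
    have "uw w f > wutil uw w (\<nu> w)"
    proof (cases "\<nu> w")
      case None then show ?thesis using uwpos f w by (simp add: wutil_def)
    next
      case (Some g)
      have gF: "g \<in> F" using m Some by (auto simp: is_matching_def)
      have "idx (rank_list (uw w) F) f < idx (rank_list (uw w) F) g" using bef Some by simp
      then have "uw w f > uw w g" using rank_list_idx[OF finF, of "uw w" f g] injw w f gF by blast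
      then show ?thesis using Some by (simp add: wutil_def)
    qed
    then show ?thesis using st f w ne unfolding stable_matching_def by blast
  qed
  show ?thesis unfolding rstable_def using m ir nb by blast
qed

lemma SPC_facts:
  assumes "SPC_orderings F W uf uw ordF ordW"
  shows "bij_betw ordF {1..card F} F" "bij_betw ordW {1..card W} W"
    "\<And>i. i \<in> {1..min (card F) (card W)} \<Longrightarrow>
        top_top uf uw (ordF ` {i..card F}) (ordW ` {i..card W}) (ordF i) (ordW i)"
  using assms unfolding SPC_orderings_def by auto

lemma bij_inj_eq: "bij_betw g {1..n} S \<Longrightarrow> i \<in> {1..n} \<Longrightarrow> j \<in> {1..n} \<Longrightarrow> g i = g j \<Longrightarrow> i = j"
  unfolding bij_betw_def inj_on_def by blast

lemma bij_surj: "bij_betw g {1..n} S \<Longrightarrow> x \<in> S \<Longrightarrow> \<exists>r\<in>{1..n}. g r = x"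
  unfolding bij_betw_def by auto

lemma bij_in: "bij_betw g {1..n} S \<Longrightarrow> i \<in> {1..n} \<Longrightarrow> g i \<in> S"
  unfolding bij_betw_def by auto

lemma pairs_lemma:
  fixes uf :: "'f \<Rightarrow> 'w \<Rightarrow> real" and uw :: "'w \<Rightarrow> 'f \<Rightarrow> real"
  assumes spc: "SPC_orderings F W uf uw ordF ordW"
    and ufpos: "\<forall>f\<in>F. \<forall>w\<in>W. uf f w > 0"
    and nu: "rstable F W uf \<rho> \<nu>"
    and good: "\<forall>j. 1 \<le> j \<longrightarrow> j < k \<longrightarrow> j \<le> min (card F) (card W) \<longrightarrow>
        ordF j \<in> set (\<rho> (ordW j)) \<and>
        (\<forall>h\<in>set (\<rho> (ordW j)). idx (\<rho> (ordW j)) h < idx (\<rho> (ordW j)) (ordF j) \<longrightarrow> h \<in> ordF ` {1..<j})"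
  shows "1 \<le> j \<Longrightarrow> j < k \<Longrightarrow> j \<le> min (card F) (card W) \<Longrightarrow> \<nu> (ordW j) = Some (ordF j)"
proof (induction j rule: less_induct)
  case (less j)
  note bF = SPC_facts(1)[OF spc] and bW = SPC_facts(2)[OF spc]
  have tt: "top_top uf uw (ordF ` {j..card F}) (ordW ` {j..card W}) (ordF j) (ordW j)"
    using SPC_facts(3)[OF spc] less.prems by auto
  have jF: "j \<in> {1..card F}" and jW: "j \<in> {1..card W}" using less.prems by auto
  have fF: "ordF j \<in> F" using bij_in[OF bF jF] .
  have wW: "ordW j \<in> W" using bij_in[OF bW jW] .
  have m: "is_matching F W \<nu>" using nu by (simp add: rstable_def)
  have gd: "ordF j \<in> set (\<rho> (ordW j))"
    "\<forall>h\<in>set (\<rho> (ordW j)). idx (\<rho> (ordW j)) h < idx (\<rho> (ordW j)) (ordF j) \<longrightarrow> h \<in> ordF ` {1..<j}"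
    using good less.prems by auto
  show ?case
  proof (rule ccontr)
    assume ne: "\<nu> (ordW j) \<noteq> Some (ordF j)"
    have bef: "\<forall>g. \<nu> (ordW j) = Some g \<longrightarrow> idx (\<rho> (ordW j)) (ordF j) < idx (\<rho> (ordW j)) g"
    proof (intro allI impI)
      fix g assume g: "\<nu> (ordW j) = Some g"
      have gl: "g \<in> set (\<rho> (ordW j))" using nu g by (auto simp: rstable_def)
      have "g \<noteq> ordF j" using g ne by auto
      then have "idx (\<rho> (ordW j)) g \<noteq> idx (\<rho> (ordW j)) (ordF j)" using idx_inj gl gd(1) by metis
      moreover have "\<not> idx (\<rho> (ordW j)) g < idx (\<rho> (ordW j)) (ordF j)"
      proof
        assume "idx (\<rho> (ordW j)) g < idx (\<rho> (ordW j)) (ordF j)"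
        then obtain j' where j': "j' \<in> {1..<j}" "g = ordF j'" using gd(2) gl by blast
        have "\<nu> (ordW j') = Some (ordF j')" using less.IH[of j'] j' less.prems by auto
        then have "ordW j' = ordW j" using g j'(2) m unfolding is_matching_def by blast
        then have "j' = j" using bij_inj_eq[OF bW] j' jW by auto
        then show False using j' by auto
      qed
      ultimately show "idx (\<rho> (ordW j)) (ordF j) < idx (\<rho> (ordW j)) g" by simp
    qed
    have "uf (ordF j) (ordW j) > futil uf \<nu> (ordF j)"
    proof (cases "\<exists>u. \<nu> u = Some (ordF j)")
      case True
      then obtain u where u: "\<nu> u = Some (ordF j)" by blast
      have uW: "u \<in> W" using m u by (auto simp: is_matching_def)
      obtain r where r: "r \<in> {1..card W}" "ordW r = u" using bij_surj[OF bW uW] by blast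
      have "u \<noteq> ordW j" using u ne by auto
      then have "r \<noteq> j" using r by auto
      have "\<not> r < j"
      proof
        assume "r < j"
        then have "\<nu> (ordW r) = Some (ordF r)" using less.IH[of r] r less.prems by auto
        then have "ordF r = ordF j" using u r by auto
        then have "r = j" using bij_inj_eq[OF bF] jF \<open>r < j\<close> less.prems r by auto
        then show False using \<open>r \<noteq> j\<close> by simp
      qed
      then have "u \<in> ordW ` {j..card W}" using r by auto
      then have "uf (ordF j) u < uf (ordF j) (ordW j)" using tt \<open>u \<noteq> ordW j\<close> unfolding top_top_def by blast
      then show ?thesis using futil_Some[OF m u] by simp
    next
      case False then show ?thesis using futil_None[of \<nu> "ordF j" uf] ufpos fF wW by auto
    qed
    then show False using nu fF wW ne gd(1) bef unfolding rstable_def by blast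
  qed
qed

lemma truthful_good:
  fixes uf :: "'f \<Rightarrow> 'w \<Rightarrow> real" and uw :: "'w \<Rightarrow> 'f \<Rightarrow> real"
  assumes spc: "SPC_orderings F W uf uw ordF ordW" and finF: "finite F"
    and injw: "\<forall>w\<in>W. inj_on (uw w) F"
    and j: "1 \<le> j" "j \<le> min (card F) (card W)"
  shows "ordF j \<in> set (rank_list (uw (ordW j)) F) \<and>
        (\<forall>h\<in>set (rank_list (uw (ordW j)) F). idx (rank_list (uw (ordW j)) F) h < idx (rank_list (uw (ordW j)) F) (ordF j) \<longrightarrow> h \<in> ordF ` {1..<j})"
proof -
  note bF = SPC_facts(1)[OF spc] and bW = SPC_facts(2)[OF spc]
  have tt: "top_top uf uw (ordF ` {j..card F}) (ordW ` {j..card W}) (ordF j) (ordW j)"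
    using SPC_facts(3)[OF spc] j by auto
  have jF: "j \<in> {1..card F}" and jW: "j \<in> {1..card W}" using j by auto
  have fF: "ordF j \<in> F" using bij_in[OF bF jF] .
  have wW: "ordW j \<in> W" using bij_in[OF bW jW] .
  have T: "set (rank_list (uw (ordW j)) F) = F" using rank_list_props[OF finF] injw wW by blast
  show ?thesis
  proof (intro conjI ballI impI)
    show "ordF j \<in> set (rank_list (uw (ordW j)) F)" using T fF by simp
  next
    fix h assume h: "h \<in> set (rank_list (uw (ordW j)) F)"
      "idx (rank_list (uw (ordW j)) F) h < idx (rank_list (uw (ordW j)) F) (ordF j)"
    have hF: "h \<in> F" using h T by simp
    have gt: "uw (ordW j) h > uw (ordW j) (ordF j)" using rank_list_idx[OF finF, of "uw (ordW j)" h "ordF j"] injw wW hF fF h(2) by blast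
    obtain r where r: "r \<in> {1..card F}" "ordF r = h" using bij_surj[OF bF hF] by blast
    have "\<not> r \<ge> j"
    proof
      assume "r \<ge> j"
      then have "h \<in> ordF ` {j..card F}" using r by auto
      moreover have "h \<noteq> ordF j" using gt by auto
      ultimately have "uw (ordW j) h < uw (ordW j) (ordF j)" using tt unfolding top_top_def by blast
      then show False using gt by simp
    qed
    then show "h \<in> ordF ` {1..<j}" using r by auto
  qed
qed

lemma SPC_match_eq:
  assumes spc: "SPC_orderings F W uf uw ordF ordW"
    and m1: "is_matching F W \<mu>1" and m2: "is_matching F W \<mu>2"
    and p1: "\<forall>j. 1 \<le> j \<longrightarrow> j \<le> min (card F) (card W) \<longrightarrow> \<mu>1 (ordW j) = Some (ordF j)"
    and p2: "\<forall>j. 1 \<le> j \<longrightarrow> j \<le> min (card F) (card W) \<longrightarrow> \<mu>2 (ordW j) = Some (ordF j)"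
  shows "\<mu>1 = \<mu>2"
proof
  fix w
  note bF = SPC_facts(1)[OF spc] and bW = SPC_facts(2)[OF spc]
  have unm: "\<mu> w = None" if m: "is_matching F W \<mu>" and p: "\<forall>j. 1 \<le> j \<longrightarrow> j \<le> min (card F) (card W) \<longrightarrow> \<mu> (ordW j) = Some (ordF j)"
    and r: "r \<in> {1..card W}" "ordW r = w" "r > min (card F) (card W)" for \<mu> r
  proof (rule ccontr)
    assume "\<mu> w \<noteq> None"
    then obtain h where h: "\<mu> w = Some h" by auto
    have hF: "h \<in> F" using m h by (auto simp: is_matching_def)
    obtain j where j: "j \<in> {1..card F}" "ordF j = h" using bij_surj[OF bF hF] by blast
    have "card F < card W" using r by auto
    then have "\<mu> (ordW j) = Some h" using p j by auto
    then have "ordW j = w" using h m unfolding is_matching_def by blast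
    then have "j = r" using bij_inj_eq[OF bW, of j r] r j \<open>card F < card W\<close> by auto
    then show False using j r by auto
  qed
  show "\<mu>1 w = \<mu>2 w"
  proof (cases "w \<in> W")
    case False then show ?thesis using m1 m2 unfolding is_matching_def by (metis not_None_eq)
  next
    case True
    obtain r where r: "r \<in> {1..card W}" "ordW r = w" using bij_surj[OF bW True] by blast
    show ?thesis
    proof (cases "r \<le> min (card F) (card W)")
      case True then show ?thesis using p1 p2 r by auto
    next
      case False
      then have "r > min (card F) (card W)" by linarith
      then show ?thesis using unm[OF m1 p1 r] unm[OF m2 p2 r] by simp
    qed
  qed
qed



lemma wutil_nonneg:
  assumes "is_matching F W \<mu>" "\<forall>w\<in>W. \<forall>f\<in>F. uw w f > 0"
  shows "wutil uw w (\<mu> w) \<ge> 0"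
proof (cases "\<mu> w")
  case None then show ?thesis by (simp add: wutil_def)
next
  case (Some f) then show ?thesis using assms unfolding is_matching_def wutil_def by force
qed

lemma SPC_dev_le:
  fixes uf :: "'f \<Rightarrow> 'w \<Rightarrow> real" and uw :: "'w \<Rightarrow> 'f \<Rightarrow> real"
  assumes spc: "SPC_orderings F W uf uw ordF ordW"
    and finF: "finite F" and finW: "finite W"
    and injf: "\<forall>f\<in>F. inj_on (uf f) W" and injw: "\<forall>w\<in>W. inj_on (uw w) F"
    and ufpos: "\<forall>f\<in>F. \<forall>w\<in>W. uf f w > 0" and uwpos: "\<forall>w\<in>W. \<forall>f\<in>F. uw w f > 0"
    and wW: "w \<in> W"
  shows "wutil uw w (DA F W (\<lambda>f. rank_list (uf f) W) ((\<lambda>w. rank_list (uw w) F)(w := L)) w)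
       \<le> wutil uw w (DA F W (\<lambda>f. rank_list (uf f) W) (\<lambda>w. rank_list (uw w) F) w)"
proof -
  let ?T = "\<lambda>w. rank_list (uw w) F"
  let ?pf = "\<lambda>f. rank_list (uf f) W"
  let ?nu = "DA F W ?pf (?T(w := L))"
  let ?mu = "DA F W ?pf ?T"
  let ?K = "min (card F) (card W)"
  note bF = SPC_facts(1)[OF spc] and bW = SPC_facts(2)[OF spc]
  have nu: "rstable F W uf (?T(w := L)) ?nu" using DA_rstable[OF finF finW injf] .
  have mu: "rstable F W uf ?T ?mu" using DA_rstable[OF finF finW injf] .
  have nm: "is_matching F W ?nu" using nu by (simp add: rstable_def)
  obtain r where r: "r \<in> {1..card W}" "ordW r = w" using bij_surj[OF bW wW] by blast
  have goodnu: "\<forall>j. 1 \<le> j \<longrightarrow> j < r \<longrightarrow> j \<le> ?K \<longrightarrow>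
        ordF j \<in> set ((?T(w := L)) (ordW j)) \<and>
        (\<forall>h\<in>set ((?T(w := L)) (ordW j)). idx ((?T(w := L)) (ordW j)) h < idx ((?T(w := L)) (ordW j)) (ordF j) \<longrightarrow> h \<in> ordF ` {1..<j})"
  proof (intro allI impI)
    fix j assume j: "1 \<le> j" "j < r" "j \<le> ?K"
    have "ordW j \<noteq> w" using bij_inj_eq[OF bW, of j r] r j by auto
    then show "ordF j \<in> set ((?T(w := L)) (ordW j)) \<and>
        (\<forall>h\<in>set ((?T(w := L)) (ordW j)). idx ((?T(w := L)) (ordW j)) h < idx ((?T(w := L)) (ordW j)) (ordF j) \<longrightarrow> h \<in> ordF ` {1..<j})"
      using truthful_good[OF spc finF injw j(1,3)] by simp
  qed
  have pnu: "\<And>j. 1 \<le> j \<Longrightarrow> j < r \<Longrightarrow> j \<le> ?K \<Longrightarrow> ?nu (ordW j) = Some (ordF j)"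
    using pairs_lemma[OF spc ufpos nu goodnu] by blast
  have pmu: "\<And>j. 1 \<le> j \<Longrightarrow> j \<le> ?K \<Longrightarrow> ?mu (ordW j) = Some (ordF j)"
    using pairs_lemma[OF spc ufpos mu, of "Suc ?K"] truthful_good[OF spc finF injw] by auto
  have low: "False" if h: "?nu w = Some h" and j: "j \<in> {1..card F}" "ordF j = h" "j < r" for h j
  proof -
    have "j \<le> ?K" using j r by auto
    then have "?nu (ordW j) = Some h" using pnu j by auto
    then have "ordW j = w" using h nm unfolding is_matching_def by blast
    then show False using bij_inj_eq[OF bW, of j r] r j by auto
  qed
  show ?thesis
  proof (cases "?nu w")
    case None
    have "wutil uw w (?mu w) \<ge> 0" using wutil_nonneg[of F W ?mu uw w] DA_matching uwpos by blast
    then show ?thesis using None by (simp add: wutil_def)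
  next
    case (Some h)
    have hF: "h \<in> F" using Some nm by (auto simp: is_matching_def)
    obtain j where j: "j \<in> {1..card F}" "ordF j = h" using bij_surj[OF bF hF] by blast
    have jr: "j \<ge> r" using low[OF Some j] by force
    then have rK: "r \<le> ?K" using j r by auto
    have tt: "top_top uf uw (ordF ` {r..card F}) (ordW ` {r..card W}) (ordF r) (ordW r)"
      using SPC_facts(3)[OF spc] rK r by auto
    have "h \<in> ordF ` {r..card F}" using j jr by auto
    then have "uw w h \<le> uw w (ordF r)" using tt r(2) unfolding top_top_def by (cases "h = ordF r") force+
    moreover have "?mu w = Some (ordF r)" using pmu[of r] rK r by auto
    ultimately show ?thesis using Some by (simp add: wutil_def)
  qed
qed



definition above :: "'f set \<Rightarrow> ('f \<Rightarrow> 'w \<Rightarrow> real) \<Rightarrow> 'w \<Rightarrow> 'w \<Rightarrow> bool" where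
  "above F uf a b \<longleftrightarrow> (\<exists>f\<in>F. uf f a > uf f b)"

definition avail :: "'f set \<Rightarrow> 'w set \<Rightarrow> ('f \<Rightarrow> 'w \<Rightarrow> real) \<Rightarrow> ('w \<Rightarrow> 'f option) \<Rightarrow> 'w \<Rightarrow> 'f \<Rightarrow> bool" where
  "avail F W uf \<nu> u h \<longleftrightarrow> h \<in> F \<and> (\<forall>u'\<in>W. above F uf u' u \<longrightarrow> \<nu> u' \<noteq> Some h)"

definition assort1 :: "'f set \<Rightarrow> 'w set \<Rightarrow> ('f \<Rightarrow> 'w \<Rightarrow> real) \<Rightarrow> bool" where
  "assort1 F W uf \<longleftrightarrow> (\<forall>f1\<in>F. \<forall>f2\<in>F. \<forall>w1\<in>W. \<forall>w2\<in>W. uf f1 w1 > uf f1 w2 \<longleftrightarrow> uf f2 w1 > uf f2 w2)"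

lemma above_iff:
  assumes "assort1 F W uf" "a \<in> W" "b \<in> W" "f \<in> F"
  shows "above F uf a b \<longleftrightarrow> uf f a > uf f b"
  using assms unfolding above_def assort1_def by blast

lemma above_trans:
  assumes "assort1 F W uf" "a \<in> W" "b \<in> W" "c \<in> W" "above F uf a b" "above F uf b c"
  shows "above F uf a c"
proof -
  obtain f where f: "f \<in> F" "uf f a > uf f b" using assms(5) unfolding above_def by blast
  have "uf f b > uf f c" using above_iff[OF assms(1,3,4) f(1)] assms(6) by simp
  then show ?thesis using f unfolding above_def by force
qed

lemma above_irrefl: "\<not> above F uf a a"
  unfolding above_def by simp

lemma SD_char:
  fixes uf :: "'f \<Rightarrow> 'w \<Rightarrow> real"
  assumes as: "assort1 F W uf" and injf: "\<forall>f\<in>F. inj_on (uf f) W"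
    and ufpos: "\<forall>f\<in>F. \<forall>w\<in>W. uf f w > 0"
    and nu: "rstable F W uf \<rho> \<nu>" and uW: "u \<in> W"
  shows "\<nu> u = find (avail F W uf \<nu> u) (\<rho> u)"
proof -
  have m: "is_matching F W \<nu>" using nu by (simp add: rstable_def)
  have blk: "False" if y: "y \<in> set (\<rho> u)" "avail F W uf \<nu> u y" "\<nu> u \<noteq> Some y"
    "\<forall>g. \<nu> u = Some g \<longrightarrow> idx (\<rho> u) y < idx (\<rho> u) g" for y
  proof -
    have yF: "y \<in> F" using y(2) by (simp add: avail_def)
    have "uf y u > futil uf \<nu> y"
    proof (cases "\<exists>u''. \<nu> u'' = Some y")
      case True
      then obtain u'' where u'': "\<nu> u'' = Some y" by blast
      have u''W: "u'' \<in> W" using m u'' by (auto simp: is_matching_def)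
      have "u'' \<noteq> u" using u'' y(3) by auto
      have "\<not> above F uf u'' u" using y(2) u'' u''W unfolding avail_def by blast
      then have "\<not> uf y u'' > uf y u" using above_iff[OF as u''W uW yF] by simp
      moreover have "uf y u'' \<noteq> uf y u" using injf yF u''W uW \<open>u'' \<noteq> u\<close> unfolding inj_on_def by blast
      ultimately have "uf y u > uf y u''" by simp
      then show ?thesis using futil_Some[OF m u''] by simp
    next
      case False then show ?thesis using futil_None[of \<nu> y uf] ufpos yF uW by auto
    qed
    then show False using nu yF uW y(1,3,4) unfolding rstable_def by blast
  qed
  show ?thesis
  proof (cases "\<nu> u")
    case None
    then have "\<forall>y\<in>set (\<rho> u). \<not> avail F W uf \<nu> u y" using blk by auto
    then have "find (avail F W uf \<nu> u) (\<rho> u) = None" by (simp add: find_None_iff)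
    then show ?thesis using None by simp
  next
    case (Some h)
    have hF: "h \<in> F" and hl: "h \<in> set (\<rho> u)" using nu Some by (auto simp: rstable_def is_matching_def)
    have ah: "avail F W uf \<nu> u h"
      unfolding avail_def using hF Some m above_irrefl unfolding is_matching_def by metis
    have "\<forall>y\<in>set (\<rho> u). avail F W uf \<nu> u y \<longrightarrow> idx (\<rho> u) h \<le> idx (\<rho> u) y"
    proof (intro ballI impI)
      fix y assume y: "y \<in> set (\<rho> u)" "avail F W uf \<nu> u y"
      show "idx (\<rho> u) h \<le> idx (\<rho> u) y"
      proof (rule ccontr)
        assume "\<not> idx (\<rho> u) h \<le> idx (\<rho> u) y"
        then have lt: "idx (\<rho> u) y < idx (\<rho> u) h" by simp
        then have "y \<noteq> h" by auto
        then show False using blk[OF y] Some lt by auto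
      qed
    qed
    then show ?thesis using find_SomeI[of h "\<rho> u" "avail F W uf \<nu> u", OF hl ah] Some by simp
  qed
qed

lemma SD_agree:
  fixes uf :: "'f \<Rightarrow> 'w \<Rightarrow> real"
  assumes as: "assort1 F W uf" and injf: "\<forall>f\<in>F. inj_on (uf f) W"
    and ufpos: "\<forall>f\<in>F. \<forall>w\<in>W. uf f w > 0" and finW: "finite W"
    and n1: "rstable F W uf \<rho>1 \<nu>1" and n2: "rstable F W uf \<rho>2 \<nu>2"
    and wW: "w \<in> W" and agr: "\<forall>u\<in>W. above F uf u w \<longrightarrow> \<rho>1 u = \<rho>2 u"
  shows "u \<in> W \<Longrightarrow> above F uf u w \<Longrightarrow> \<nu>1 u = \<nu>2 u"
proof (induction u rule: measure_induct_rule[of "\<lambda>u. card {u'\<in>W. above F uf u' u}"])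
  case (less u)
  have "avail F W uf \<nu>1 u = avail F W uf \<nu>2 u"
  proof
    fix h
    have "\<forall>u'\<in>W. above F uf u' u \<longrightarrow> \<nu>1 u' = \<nu>2 u'"
    proof (intro ballI impI)
      fix u' assume u': "u' \<in> W" "above F uf u' u"
      have s1: "{v\<in>W. above F uf v u'} \<subseteq> {v\<in>W. above F uf v u}"
      proof
        fix v assume "v \<in> {v\<in>W. above F uf v u'}"
        then have v: "v \<in> W" "above F uf v u'" by auto
        show "v \<in> {v\<in>W. above F uf v u}" using above_trans[OF as v(1) u'(1) less.prems(1) v(2) u'(2)] v(1) by simp
      qed
      have s2: "u' \<in> {v\<in>W. above F uf v u}" "u' \<notin> {v\<in>W. above F uf v u'}"
        using u' above_irrefl[of F uf u'] by auto
      have sub: "{v\<in>W. above F uf v u'} \<subset> {v\<in>W. above F uf v u}"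
        using s1 s2 by blast
      have "card {v\<in>W. above F uf v u'} < card {v\<in>W. above F uf v u}"
        using psubset_card_mono[OF _ sub] finW by simp
      moreover have "above F uf u' w" using above_trans[OF as u'(1) less.prems(1) wW u'(2) less.prems(2)] .
      ultimately show "\<nu>1 u' = \<nu>2 u'" using less.IH[of u'] u'(1) by simp
    qed
    then show "avail F W uf \<nu>1 u h = avail F W uf \<nu>2 u h" unfolding avail_def by auto
  qed
  moreover have "\<rho>1 u = \<rho>2 u" using agr less.prems by blast
  ultimately have "find (avail F W uf \<nu>1 u) (\<rho>1 u) = find (avail F W uf \<nu>2 u) (\<rho>2 u)" by simp
  moreover have "\<nu>1 u = find (avail F W uf \<nu>1 u) (\<rho>1 u)" by (rule SD_char[OF as injf ufpos n1 less.prems(1)])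
  moreover have "\<nu>2 u = find (avail F W uf \<nu>2 u) (\<rho>2 u)" by (rule SD_char[OF as injf ufpos n2 less.prems(1)])
  ultimately show ?case by simp
qed

lemma find_T_best:
  fixes uw :: "'w \<Rightarrow> 'f \<Rightarrow> real"
  assumes finF: "finite F" and injw: "inj_on (uw w) F" and uwpos: "\<forall>f\<in>F. uw w f > 0"
    and PF: "\<forall>h. P h \<longrightarrow> h \<in> F"
  shows "wutil uw w (find P L) \<le> wutil uw w (find P (rank_list (uw w) F))"
proof -
  let ?T = "rank_list (uw w) F"
  have T: "set ?T = F" using rank_list_props[OF finF injw] by blast
  have nn: "wutil uw w (find P ?T) \<ge> 0"
  proof (cases "find P ?T")
    case None then show ?thesis by (simp add: wutil_def)
  next
    case (Some h) then show ?thesis using find_SomeD[OF Some] T uwpos by (force simp: wutil_def)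
  qed
  show ?thesis
  proof (cases "find P L")
    case None then show ?thesis using nn by (simp add: wutil_def)
  next
    case (Some h)
    have h: "P h" "h \<in> F" using find_SomeD[OF Some] PF by auto
    then have "h \<in> set ?T" using T by simp
    then obtain h' where h': "find P ?T = Some h'" "idx ?T h' \<le> idx ?T h"
      using find_SomeD h(1) by (metis find_None_iff option.exhaust)
    have h'F: "h' \<in> F" using find_SomeD[OF h'(1)] T by auto
    have "\<not> uw w h > uw w h'"
      using rank_list_idx[OF finF injw h(2) h'F] h'(2) by simp
    then show ?thesis using Some h' by (simp add: wutil_def)
  qed
qed

lemma SD_dev_le:
  fixes uf :: "'f \<Rightarrow> 'w \<Rightarrow> real" and uw :: "'w \<Rightarrow> 'f \<Rightarrow> real"
  assumes as: "assort1 F W uf" and finF: "finite F" and finW: "finite W"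
    and injf: "\<forall>f\<in>F. inj_on (uf f) W" and injw: "\<forall>w\<in>W. inj_on (uw w) F"
    and ufpos: "\<forall>f\<in>F. \<forall>w\<in>W. uf f w > 0" and uwpos: "\<forall>w\<in>W. \<forall>f\<in>F. uw w f > 0"
    and wW: "w \<in> W"
  shows "wutil uw w (DA F W (\<lambda>f. rank_list (uf f) W) (\<rho>(w := L)) w)
       \<le> wutil uw w (DA F W (\<lambda>f. rank_list (uf f) W) (\<rho>(w := rank_list (uw w) F)) w)"
    and "avail F W uf (DA F W (\<lambda>f. rank_list (uf f) W) (\<rho>(w := L))) w =
         avail F W uf (DA F W (\<lambda>f. rank_list (uf f) W) (\<rho>(w := rank_list (uw w) F))) w"
    and "DA F W (\<lambda>f. rank_list (uf f) W) (\<rho>(w := L)) w =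
         find (avail F W uf (DA F W (\<lambda>f. rank_list (uf f) W) (\<rho>(w := L))) w) L"
proof -
  let ?pf = "\<lambda>f. rank_list (uf f) W"
  let ?T = "rank_list (uw w) F"
  let ?n1 = "DA F W ?pf (\<rho>(w := L))"
  let ?n2 = "DA F W ?pf (\<rho>(w := ?T))"
  have n1: "rstable F W uf (\<rho>(w := L)) ?n1" using DA_rstable[OF finF finW injf] .
  have n2: "rstable F W uf (\<rho>(w := ?T)) ?n2" using DA_rstable[OF finF finW injf] .
  have agr: "\<forall>u\<in>W. above F uf u w \<longrightarrow> (\<rho>(w := L)) u = (\<rho>(w := ?T)) u"
    using above_irrefl by fastforce
  have eqa: "\<forall>u\<in>W. above F uf u w \<longrightarrow> ?n1 u = ?n2 u"
    using SD_agree[OF as injf ufpos finW n1 n2 wW agr] by blast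
  show av: "avail F W uf ?n1 w = avail F W uf ?n2 w"
    using eqa unfolding avail_def by (intro ext) auto
  show c1: "?n1 w = find (avail F W uf ?n1 w) L" using SD_char[OF as injf ufpos n1 wW] by (simp only: fun_upd_same)
  have c2: "?n2 w = find (avail F W uf ?n1 w) ?T" using SD_char[OF as injf ufpos n2 wW] unfolding av by simp
  show "wutil uw w (?n1 w) \<le> wutil uw w (?n2 w)"
    unfolding c1 c2 using find_T_best[OF finF, of uw w "avail F W uf ?n1 w" L] injw uwpos wW
    by (auto simp: avail_def)
qed



locale econ =
  fixes F :: "'f set" and W :: "'w set" and \<Theta> :: "'s set"
    and uf :: "'s \<Rightarrow> 'f \<Rightarrow> 'w \<Rightarrow> real" and uw :: "'w \<Rightarrow> 'f \<Rightarrow> real"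
    and \<Psi> :: "'s \<Rightarrow> real"
  assumes finF: "finite F" and finW: "finite W"
    and fin\<Theta>: "finite \<Theta>"
    and prior_pos: "\<forall>\<theta>\<in>\<Theta>. \<Psi> \<theta> > 0"
    and uf_pos: "\<forall>\<theta>\<in>\<Theta>. \<forall>f\<in>F. \<forall>w\<in>W. uf \<theta> f w > 0"
    and uw_pos: "\<forall>w\<in>W. \<forall>f\<in>F. uw w f > 0"
    and uf_strict: "\<forall>\<theta>\<in>\<Theta>. \<forall>f\<in>F. inj_on (uf \<theta> f) W"
    and uw_strict: "\<forall>w\<in>W. inj_on (uw w) F"
begin

abbreviation "T \<equiv> (\<lambda>w. rank_list (uw w) F)"
abbreviation "out \<theta> \<sigma> \<equiv> game_outcome F W uf \<theta> \<sigma>"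
abbreviation "EU \<sigma> w \<equiv> expected_utility F W uf uw \<Theta> \<Psi> \<sigma> w"

lemma out_eq: "out \<theta> \<sigma> = DA F W (\<lambda>f. rank_list (uf \<theta> f) W) \<sigma>"
  by (simp add: game_outcome_def)

lemma EU_le:
  assumes "\<forall>\<theta>\<in>\<Theta>. wutil uw w (out \<theta> \<sigma>1 w) \<le> wutil uw w (out \<theta> \<sigma>2 w)"
  shows "EU \<sigma>1 w \<le> EU \<sigma>2 w"
  unfolding expected_utility_def
  using assms prior_pos by (intro sum_mono) (simp add: mult_left_mono less_imp_le)

lemma EU_less:
  assumes "\<forall>\<theta>\<in>\<Theta>. wutil uw w (out \<theta> \<sigma>1 w) \<le> wutil uw w (out \<theta> \<sigma>2 w)"
    and "\<theta>0 \<in> \<Theta>" "wutil uw w (out \<theta>0 \<sigma>1 w) < wutil uw w (out \<theta>0 \<sigma>2 w)"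
  shows "EU \<sigma>1 w < EU \<sigma>2 w"
  unfolding expected_utility_def
proof (rule sum_strict_mono_ex1[OF fin\<Theta>])
  show "\<forall>x\<in>\<Theta>. \<Psi> x * wutil uw w (game_outcome F W uf x \<sigma>1 w) \<le> \<Psi> x * wutil uw w (game_outcome F W uf x \<sigma>2 w)"
    using assms(1) prior_pos by (simp add: mult_left_mono less_imp_le)
  show "\<exists>a\<in>\<Theta>. \<Psi> a * wutil uw w (game_outcome F W uf a \<sigma>1 w) < \<Psi> a * wutil uw w (game_outcome F W uf a \<sigma>2 w)"
    using assms(2,3) prior_pos by (intro bexI[of _ \<theta>0]) auto
qed

lemma T_valid: "w \<in> W \<Longrightarrow> valid_list F (T w)"
  using rank_list_props[OF finF] uw_strict unfolding valid_list_def by blast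

lemma BNE_T_SPC:
  assumes spc: "\<forall>\<theta>\<in>\<Theta>. SPC_orderings F W (uf \<theta>) uw (oF \<theta>) (oW \<theta>)"
  shows "is_BNE F W uf uw \<Theta> \<Psi> T"
  unfolding is_BNE_def
proof (intro conjI ballI allI impI)
  fix w assume "w \<in> W" then show "valid_list F (T w)" by (rule T_valid)
next
  fix w L assume w: "w \<in> W" and "valid_list F L"
  show "EU (T(w := L)) w \<le> EU T w"
  proof (rule EU_le, intro ballI)
    fix \<theta> assume th: "\<theta> \<in> \<Theta>"
    show "wutil uw w (out \<theta> (T(w := L)) w) \<le> wutil uw w (out \<theta> T w)"
      unfolding out_eq
      using SPC_dev_le[OF spc[rule_format, OF th] finF finW _ uw_strict _ uw_pos w] uf_strict uf_pos th by blast
  qed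
qed

lemma BNE_T_assort:
  assumes as: "assortative_firms F W uf \<Theta>"
  shows "is_BNE F W uf uw \<Theta> \<Psi> T"
  unfolding is_BNE_def
proof (intro conjI ballI allI impI)
  fix w assume "w \<in> W" then show "valid_list F (T w)" by (rule T_valid)
next
  fix w L assume w: "w \<in> W" and "valid_list F L"
  show "EU (T(w := L)) w \<le> EU T w"
  proof (rule EU_le, intro ballI)
    fix \<theta> assume th: "\<theta> \<in> \<Theta>"
    have a1: "assort1 F W (uf \<theta>)" using as th unfolding assortative_firms_def assort1_def by blast
    have "T(w := T w) = T" by (rule ext) simp
    then show "wutil uw w (out \<theta> (T(w := L)) w) \<le> wutil uw w (out \<theta> T w)"
      unfolding out_eq
      using SD_dev_le(1)[OF a1 finF finW _ uw_strict _ uw_pos w, of T L] uf_strict uf_pos th by metis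
  qed
qed

lemma assort_unique:
  assumes as: "assortative_firms F W uf \<Theta>" and bne: "is_BNE F W uf uw \<Theta> \<Psi> \<sigma>" and th: "\<theta> \<in> \<Theta>"
  shows "stable_matching F W (uf \<theta>) uw (out \<theta> \<sigma>)"
proof -
  have a1: "\<And>s. s \<in> \<Theta> \<Longrightarrow> assort1 F W (uf s)" using as unfolding assortative_firms_def assort1_def by blast
  let ?pf = "\<lambda>f. rank_list (uf \<theta> f) W"
  let ?mu = "out \<theta> \<sigma>"
  have eqs: "wutil uw w (out \<theta> \<sigma> w) = wutil uw w (out \<theta> (\<sigma>(w := T w)) w)" if w: "w \<in> W" for w
  proof -
    have le: "\<forall>s\<in>\<Theta>. wutil uw w (out s \<sigma> w) \<le> wutil uw w (out s (\<sigma>(w := T w)) w)"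
    proof
      fix s assume s: "s \<in> \<Theta>"
      have "\<sigma>(w := \<sigma> w) = \<sigma>" by simp
      then show "wutil uw w (out s \<sigma> w) \<le> wutil uw w (out s (\<sigma>(w := T w)) w)"
        unfolding out_eq
        using SD_dev_le(1)[OF a1[OF s] finF finW _ uw_strict _ uw_pos w, of \<sigma> "\<sigma> w"] uf_strict uf_pos s by metis
    qed
    have ge: "EU (\<sigma>(w := T w)) w \<le> EU \<sigma> w" using bne T_valid w unfolding is_BNE_def by blast
    show ?thesis
    proof (rule ccontr)
      assume "wutil uw w (out \<theta> \<sigma> w) \<noteq> wutil uw w (out \<theta> (\<sigma>(w := T w)) w)"
      then have "wutil uw w (out \<theta> \<sigma> w) < wutil uw w (out \<theta> (\<sigma>(w := T w)) w)" using le th by force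
      then have "EU \<sigma> w < EU (\<sigma>(w := T w)) w" using EU_less[OF le th] by blast
      then show False using ge by simp
    qed
  qed
  have ufp: "\<forall>f\<in>F. \<forall>w\<in>W. uf \<theta> f w > 0" using uf_pos th by blast
  have ufi: "\<forall>f\<in>F. inj_on (uf \<theta> f) W" using uf_strict th by blast
  have rs: "rstable F W (uf \<theta>) \<sigma> ?mu" unfolding out_eq using DA_rstable[OF finF finW ufi] .
  have m: "is_matching F W ?mu" using rs by (simp add: rstable_def)
  have ir: "\<forall>w f. ?mu w = Some f \<longrightarrow> uf \<theta> f w \<ge> 0 \<and> uw w f \<ge> 0"
    using m ufp uw_pos unfolding is_matching_def by (meson less_imp_le)
  have nb: "\<not> (uw w f > wutil uw w (?mu w) \<and> uf \<theta> f w > futil (uf \<theta>) ?mu f)"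
    if f: "f \<in> F" and w: "w \<in> W" and ne: "?mu w \<noteq> Some f" for f w
  proof
    assume bl: "uw w f > wutil uw w (?mu w) \<and> uf \<theta> f w > futil (uf \<theta>) ?mu f"
    have av: "avail F W (uf \<theta>) ?mu w f"
      unfolding avail_def
    proof (intro conjI ballI impI)
      show "f \<in> F" by (rule f)
    next
      fix u' assume u': "u' \<in> W" "above F (uf \<theta>) u' w"
      show "?mu u' \<noteq> Some f"
      proof
        assume mu': "?mu u' = Some f"
        have "futil (uf \<theta>) ?mu f = uf \<theta> f u'" using futil_Some[OF m mu'] .
        moreover have "uf \<theta> f u' > uf \<theta> f w" using above_iff[OF a1[OF th] u'(1) w f] u'(2) by simp
        ultimately show False using bl by simp
      qed
    qed
    let ?mu' = "out \<theta> (\<sigma>(w := T w))"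
    have avq: "avail F W (uf \<theta>) ?mu w = avail F W (uf \<theta>) ?mu' w"
      using SD_dev_le(2)[OF a1[OF th] finF finW ufi uw_strict ufp uw_pos w, of \<sigma> "\<sigma> w"]
      unfolding out_eq by simp
    have c2: "?mu' w = find (avail F W (uf \<theta>) ?mu w) (T w)"
      using SD_dev_le(3)[OF a1[OF th] finF finW ufi uw_strict ufp uw_pos w, of \<sigma> "T w"] avq
      unfolding out_eq by simp
    have TF: "set (T w) = F" using rank_list_props[OF finF] uw_strict w by blast
    obtain h where h: "find (avail F W (uf \<theta>) ?mu w) (T w) = Some h" "idx (T w) h \<le> idx (T w) f"
      using find_SomeD av f TF by (metis find_None_iff option.exhaust)
    have hF: "h \<in> F" using find_SomeD[OF h(1)] TF by auto
    have "\<not> uw w f > uw w h" using rank_list_idx[OF finF, of "uw w" f h] uw_strict w f hF h(2) by auto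
    then have "wutil uw w (?mu' w) \<ge> uw w f" using c2 h(1) by (simp add: wutil_def)
    then show False using eqs[OF w] bl by simp
  qed
  show ?thesis unfolding stable_matching_def using m ir nb by blast
qed

lemma bad_noB:
  assumes spc: "SPC_orderings F W (uf s) uw (oF s) (oW s)" and s: "s \<in> \<Theta>"
    and IHs: "\<forall>j. 1 \<le> j \<longrightarrow> j < i \<longrightarrow> j \<le> min (card F) (card W) \<longrightarrow> out s \<sigma> (oW s j) = Some (oF s j)"
    and j: "j \<in> {1..<i}" and iK: "i \<le> min (card F) (card W)"
    and r: "r \<in> {1..card W}" "r \<ge> i"
  shows "\<forall>k\<le>card F * card W + 1. da_target (\<lambda>f. rank_list (uf s f) W) (run F (\<lambda>f. rank_list (uf s f) W) \<sigma> k) (oF s j) \<noteq> Some (oW s r)"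
proof (intro allI impI)
  fix k assume k: "k \<le> card F * card W + 1"
  let ?pf = "\<lambda>f. rank_list (uf s f) W"
  let ?M = "card F * card W + 1"
  note bF = SPC_facts(1)[OF spc] and bW = SPC_facts(2)[OF spc]
  have jK: "j \<le> min (card F) (card W)" using j iK by auto
  have jW: "j \<in> {1..card W}" and jF: "j \<in> {1..card F}" using jK j by auto
  have yF: "oF s j \<in> F" using bij_in[OF bF jF] .
  have wjW: "oW s j \<in> W" using bij_in[OF bW jW] .
  have wW: "oW s r \<in> W" using bij_in[OF bW r(1)] .
  have "out s \<sigma> (oW s j) = Some (oF s j)" using IHs j jK by auto
  then have "da_held F ?pf \<sigma> (run F ?pf \<sigma> ?M) (oW s j) = Some (oF s j)"
    using wjW by (simp add: out_eq DA_eq)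
  then have tM: "da_target ?pf (run F ?pf \<sigma> ?M) (oF s j) = Some (oW s j)" using held_SomeD[of F ?pf \<sigma>] by auto
  have tt: "top_top (uf s) uw (oF s ` {j..card F}) (oW s ` {j..card W}) (oF s j) (oW s j)"
    using SPC_facts(3)[OF spc] jK j by auto
  have "r \<noteq> j" using r j by auto
  then have "oW s r \<noteq> oW s j" using bij_inj_eq[OF bW r(1) jW] by blast
  moreover have "r \<in> {j..card W}" using r j by auto
  ultimately have lt: "uf s (oF s j) (oW s r) < uf s (oF s j) (oW s j)" using tt unfolding top_top_def by blast
  have ilt: "idx (?pf (oF s j)) (oW s j) < idx (?pf (oF s j)) (oW s r)"
    using rank_list_idx[OF finW, of "uf s (oF s j)" "oW s j" "oW s r"] uf_strict s yF wjW wW lt by simp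
  show "da_target ?pf (run F ?pf \<sigma> k) (oF s j) \<noteq> Some (oW s r)"
  proof
    assume "da_target ?pf (run F ?pf \<sigma> k) (oF s j) = Some (oW s r)"
    then have "idx (?pf (oF s j)) (oW s r) \<le> idx (?pf (oF s j)) (oW s j)"
      using target_mono[OF run_mono[OF k] _ tM] by simp
    then show False using ilt by simp
  qed
qed

lemma sorted_idx_gt:
  fixes u :: "'a \<Rightarrow> real"
  assumes "distinct xs" "sorted_wrt (\<lambda>a b. u a > u b) xs" "a \<in> set xs" "b \<in> set xs" "idx xs a < idx xs b"
  shows "u a > u b"
proof -
  have a: "idx xs a < length xs" "xs ! idx xs a = a" using idx_nth[OF assms(3)] by auto
  have b: "idx xs b < length xs" "xs ! idx xs b = b" using idx_nth[OF assms(4)] by auto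
  have "u (xs ! idx xs a) > u (xs ! idx xs b)"
    using assms(2) assms(5) b(1) unfolding sorted_wrt_iff_nth_less by blast
  then show ?thesis using a b by simp
qed

lemma pins_lemma:
  fixes ufs :: "'f \<Rightarrow> 'w \<Rightarrow> real"
  assumes spc: "SPC_orderings F W ufs uw oF oW"
    and ufpos: "\<forall>f\<in>F. \<forall>w\<in>W. ufs f w > 0"
    and m: "is_matching F W \<mu>" and m': "is_matching F W \<mu>'"
    and p: "\<forall>j. 1 \<le> j \<longrightarrow> j \<le> k \<longrightarrow> \<mu> (oW j) = Some (oF j)"
    and kK: "k \<le> min (card F) (card W)"
    and better: "\<forall>y\<in>F. futil ufs \<mu> y \<le> futil ufs \<mu>' y"
  shows "1 \<le> j \<Longrightarrow> j \<le> k \<Longrightarrow> \<mu>' (oW j) = Some (oF j)"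
proof (induction j rule: less_induct)
  case (less j)
  note bF = SPC_facts(1)[OF spc] and bW = SPC_facts(2)[OF spc]
  have jF: "j \<in> {1..card F}" and jW: "j \<in> {1..card W}" using less.prems kK by auto
  have fF: "oF j \<in> F" using bij_in[OF bF jF] .
  have wW: "oW j \<in> W" using bij_in[OF bW jW] .
  have tt: "top_top ufs uw (oF ` {j..card F}) (oW ` {j..card W}) (oF j) (oW j)"
    using SPC_facts(3)[OF spc] less.prems kK by auto
  have pj: "\<mu> (oW j) = Some (oF j)" using p less.prems by blast
  have "futil ufs \<mu> (oF j) = ufs (oF j) (oW j)" using futil_Some[OF m pj] .
  moreover have "futil ufs \<mu> (oF j) \<le> futil ufs \<mu>' (oF j)" using better fF by blast
  ultimately have ge: "futil ufs \<mu>' (oF j) \<ge> ufs (oF j) (oW j)" by simp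
  have pos: "ufs (oF j) (oW j) > 0" using ufpos fF wW by blast
  have "\<exists>u. \<mu>' u = Some (oF j)"
  proof (rule ccontr)
    assume "\<not> (\<exists>u. \<mu>' u = Some (oF j))"
    then have "futil ufs \<mu>' (oF j) = 0" using futil_None[of \<mu>' "oF j" ufs] by blast
    then show False using ge pos by simp
  qed
  then obtain u where u: "\<mu>' u = Some (oF j)" by blast
  have uW: "u \<in> W" using m' u by (auto simp: is_matching_def)
  have ge2: "ufs (oF j) u \<ge> ufs (oF j) (oW j)" using ge futil_Some[OF m' u] by simp
  obtain r where r: "r \<in> {1..card W}" "oW r = u" using bij_surj[OF bW uW] by blast
  have "\<not> r < j"
  proof
    assume rj: "r < j"
    then have "\<mu>' (oW r) = Some (oF r)" using less.IH[of r] less.prems r by auto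
    then have "oF r = oF j" using u r by auto
    moreover have "r \<in> {1..card F}" using rj jF r(1) by auto
    ultimately have "r = j" using bij_inj_eq[OF bF _ jF] by blast
    then show False using rj by simp
  qed
  then have rj: "r \<in> {j..card W}" using r by auto
  have "u = oW j"
  proof (rule ccontr)
    assume "u \<noteq> oW j"
    then have "ufs (oF j) u < ufs (oF j) (oW j)" using tt rj r(2) unfolding top_top_def by blast
    then show False using ge2 by simp
  qed
  then show ?case using u by simp
qed

lemma step_lemma:
  assumes spc: "\<forall>\<theta>\<in>\<Theta>. SPC_orderings F W (uf \<theta>) uw (oF \<theta>) (oW \<theta>)"
    and star: "\<forall>\<theta>\<in>\<Theta>. \<forall>i\<in>{1..min (card F) (card W)}. \<forall>f\<in>F.
           uw (oW \<theta> i) f > uw (oW \<theta> i) (oF \<theta> i) \<longrightarrow>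
           (\<forall>\<theta>'\<in>\<Theta>. \<exists>i'\<in>{1..<i}. f = oF \<theta>' i')"
    and bne: "is_BNE F W uf uw \<Theta> \<Psi> \<sigma>"
    and IH: "\<forall>s\<in>\<Theta>. \<forall>j. 1 \<le> j \<longrightarrow> j < i \<longrightarrow> j \<le> min (card F) (card W) \<longrightarrow> out s \<sigma> (oW s j) = Some (oF s j)"
    and i: "1 \<le> i" "i \<le> min (card F) (card W)" and th: "\<theta> \<in> \<Theta>"
  shows "out \<theta> \<sigma> (oW \<theta> i) = Some (oF \<theta> i)"
proof (rule ccontr)
  let ?K = "min (card F) (card W)"
  let ?M = "card F * card W + 1"
  define w where "w = oW \<theta> i"
  define f where "f = oF \<theta> i"
  assume ne0: "out \<theta> \<sigma> (oW \<theta> i) \<noteq> Some (oF \<theta> i)"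
  then have ne: "out \<theta> \<sigma> w \<noteq> Some f" by (simp add: w_def f_def)
  have spc\<theta>: "SPC_orderings F W (uf \<theta>) uw (oF \<theta>) (oW \<theta>)" using spc th by blast
  note bF\<theta> = SPC_facts(1)[OF spc\<theta>] and bW\<theta> = SPC_facts(2)[OF spc\<theta>]
  have iF: "i \<in> {1..card F}" and iW: "i \<in> {1..card W}" using i by auto
  have fF: "f \<in> F" unfolding f_def using bij_in[OF bF\<theta> iF] .
  have wW: "w \<in> W" unfolding w_def using bij_in[OF bW\<theta> iW] .
  define B where "B = {h\<in>F. uw w h > uw w f}"
  define TB where "TB = filter (\<lambda>h. h \<in> B) (T w)"
  define L where "L = dev_list TB f (\<sigma> w)"
  have TF: "distinct (T w)" "set (T w) = F" "sorted_wrt (\<lambda>a b. uw w a > uw w b) (T w)"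
    using rank_list_props[OF finF, of "uw w"] uw_strict wW by auto
  have setTB: "set TB = B" using TF(2) by (auto simp: TB_def B_def)
  have dTB: "distinct TB" using TF(1) by (simp add: TB_def)
  have sTB: "sorted_wrt (\<lambda>a b. uw w a > uw w b) TB" using TF(3) by (simp add: TB_def sorted_wrt_filter)
  have fTB: "f \<notin> set TB" using setTB by (simp add: B_def)
  have B1: "\<exists>j\<in>{1..<i}. y = oF s j" if y: "y \<in> B" and s: "s \<in> \<Theta>" for y s
  proof -
    have "y \<in> F" "uw (oW \<theta> i) y > uw (oW \<theta> i) (oF \<theta> i)" using y by (auto simp: B_def w_def f_def)
    then show ?thesis using star th i s by auto
  qed
  have sw: "valid_list F (\<sigma> w)" using bne wW by (simp add: is_BNE_def)
  have vL: "valid_list F L"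
    using sw dTB fTB setTB fF unfolding valid_list_def L_def dev_list_def by (auto simp: B_def)
  have cmp: "wutil uw w (out s \<sigma> w) \<le> wutil uw w (out s (\<sigma>(w := L)) w) \<and>
      (s = \<theta> \<longrightarrow> wutil uw w (out s \<sigma> w) < wutil uw w (out s (\<sigma>(w := L)) w))"
    if s: "s \<in> \<Theta>" for s
  proof -
    have spcs: "SPC_orderings F W (uf s) uw (oF s) (oW s)" using spc s by blast
    note bF = SPC_facts(1)[OF spcs] and bW = SPC_facts(2)[OF spcs]
    let ?pf = "\<lambda>f. rank_list (uf s f) W"
    let ?mu = "out s \<sigma>"
    let ?mu' = "out s (\<sigma>(w := L))"
    have ufi: "\<forall>f\<in>F. inj_on (uf s f) W" using uf_strict s by blast
    have ufp: "\<forall>f\<in>F. \<forall>w\<in>W. uf s f w > 0" using uf_pos s by blast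
    have pfW: "\<forall>f\<in>F. set (?pf f) = W" using rank_list_props[OF finW] ufi by blast
    obtain r where r: "r \<in> {1..card W}" "oW s r = w" using bij_surj[OF bW wW] by blast
    have IHs: "\<And>j. 1 \<le> j \<Longrightarrow> j < i \<Longrightarrow> ?mu (oW s j) = Some (oF s j)" using IH s i by auto
    have rs: "rstable F W (uf s) \<sigma> ?mu" unfolding out_eq using DA_rstable[OF finF finW ufi] .
    have mm: "is_matching F W ?mu" using rs by (simp add: rstable_def)
    show ?thesis
    proof (cases "r < i")
      case True
      have rK: "r \<le> ?K" using True i by auto
      have rF: "r \<in> {1..card F}" using rK r by auto
      define g where "g = oF s r"
      have gF: "g \<in> F" unfolding g_def using bij_in[OF bF rF] .
      have mug: "?mu w = Some g" using IHs[of r] r True by (simp add: g_def)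
      have "s \<noteq> \<theta>"
      proof
        assume "s = \<theta>"
        then have "oW \<theta> r = oW \<theta> i" using r by (simp add: w_def)
        then have "r = i" using bij_inj_eq[OF bW\<theta> r(1) iW] by blast
        then show False using True by simp
      qed
      have gB: "g \<in> B \<or> g = f"
      proof (rule ccontr)
        assume c: "\<not> (g \<in> B \<or> g = f)"
        then have "\<not> uw w g > uw w f" "g \<noteq> f" using gF by (auto simp: B_def)
        moreover have "uw w g \<noteq> uw w f" using uw_strict wW gF fF \<open>g \<noteq> f\<close> unfolding inj_on_def by blast
        ultimately have "uw (oW s r) f > uw (oW s r) (oF s r)" using r(2) by (simp add: g_def)
        then have "\<exists>i'\<in>{1..<r}. f = oF \<theta> i'" using star s rK r fF th by auto
        then obtain i' where i': "i' \<in> {1..<r}" "oF \<theta> i' = oF \<theta> i" by (auto simp: f_def)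
        have "i' \<in> {1..card F}" using i' rF by auto
        then have "i' = i" using bij_inj_eq[OF bF\<theta> _ iF] i'(2) by blast
        then show False using i' True by auto
      qed
      have gL: "g \<in> set L" using gB setTB by (auto simp: L_def dev_list_def)
      have rs': "rstable F W (uf s) (\<sigma>(w := L)) ?mu"
        unfolding rstable_def
      proof (intro conjI allI impI ballI)
        show "is_matching F W ?mu" by (rule mm)
      next
        fix u h assume uh: "?mu u = Some h"
        show "h \<in> set ((\<sigma>(w := L)) u)"
        proof (cases "u = w")
          case True then show ?thesis using uh mug gL by simp
        next
          case False then show ?thesis using rs uh by (simp add: rstable_def)
        qed
      next
        fix y u assume y: "y \<in> F" and u: "u \<in> W" and nyu: "?mu u \<noteq> Some y"
          and yl: "y \<in> set ((\<sigma>(w := L)) u)"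
          and bef: "\<forall>g. ?mu u = Some g \<longrightarrow> idx ((\<sigma>(w := L)) u) y < idx ((\<sigma>(w := L)) u) g"
        show "\<not> uf s y u > futil (uf s) ?mu y"
        proof (cases "u = w")
          case False then show ?thesis using rs y u nyu yl bef by (simp add: rstable_def)
        next
          case True
          have lt: "idx L y < idx L g" using bef mug True by simp
          have yTB: "y \<in> set TB \<and> uw w y > uw w g"
          proof (cases "g \<in> set TB")
            case True
            have ig: "idx L g = idx TB g" using True by (simp add: L_def dev_list_def idx_append)
            have "idx TB g < length TB" using idx_nth[OF True] by simp
            then have yT: "y \<in> set TB" using lt ig
              by (cases "y \<in> set TB") (auto simp: L_def dev_list_def idx_append)
            then have "idx TB y < idx TB g" using lt ig by (simp add: L_def dev_list_def idx_append)
            then show ?thesis using sorted_idx_gt[OF dTB sTB yT True] yT by simp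
          next
            case False
            then have gf: "g = f" using gB setTB by auto
            have ig: "idx L g = length TB" using fTB gf by (simp add: L_def dev_list_def idx_append idx_Cons)
            have yT: "y \<in> set TB" using lt ig
              by (cases "y \<in> set TB") (auto simp: L_def dev_list_def idx_append)
            then show ?thesis using setTB gf by (auto simp: B_def)
          qed
          then have "uw (oW s r) y > uw (oW s r) (oF s r)" using r(2) by (simp add: g_def)
          then obtain j' where j': "j' \<in> {1..<r}" "y = oF s j'" using star s rK r y by force
          have mj: "?mu (oW s j') = Some y" using IHs[of j'] j' True \<open>r < i\<close> by auto
          have j'K: "j' \<le> ?K" using j' rK by auto
          have tt: "top_top (uf s) uw (oF s ` {j'..card F}) (oW s ` {j'..card W}) (oF s j') (oW s j')"
            using SPC_facts(3)[OF spcs] j'K j' by auto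
          have j'W: "j' \<in> {1..card W}" using j' r by auto
          have "oW s r \<noteq> oW s j'"
          proof
            assume "oW s r = oW s j'"
            then have "r = j'" using bij_inj_eq[OF bW r(1) j'W] by blast
            then show False using j' by simp
          qed
          moreover have "r \<in> {j'..card W}" using r j' by auto
          ultimately have "uf s y (oW s r) < uf s y (oW s j')" using tt j'(2) unfolding top_top_def by blast
          then show ?thesis using futil_Some[OF mm mj] True r(2) by simp
        qed
      qed
      have better: "\<forall>y\<in>F. futil (uf s) ?mu y \<le> futil (uf s) ?mu' y"
        using DA_firm_opt[OF finF finW ufi ufp rs'] unfolding out_eq by blast
      have p: "\<forall>j. 1 \<le> j \<longrightarrow> j \<le> r \<longrightarrow> ?mu (oW s j) = Some (oF s j)" using IHs True by auto
      have mm': "is_matching F W ?mu'" unfolding out_eq by (rule DA_matching)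
      have "?mu' (oW s r) = Some (oF s r)"
        using pins_lemma[OF spcs ufp mm mm' p rK better, of r] r by auto
      then have "?mu' w = ?mu w" using mug r(2) by (simp add: g_def)
      then show ?thesis using \<open>s \<noteq> \<theta>\<close> by simp
    next
      case False
      then have ri: "r \<ge> i" by simp
      have noB: "\<forall>k\<le>?M. \<forall>y\<in>set TB. da_target ?pf (run F ?pf \<sigma> k) y \<noteq> Some w"
      proof (intro allI impI ballI)
        fix k y assume k: "k \<le> ?M" and y: "y \<in> set TB"
        obtain j where j: "j \<in> {1..<i}" "y = oF s j" using B1[of y s] y setTB s by auto
        show "da_target ?pf (run F ?pf \<sigma> k) y \<noteq> Some w"
          using bad_noB[where s=s and oF=oF and oW=oW and \<sigma>=\<sigma> and i=i and j=j and r=r, OF spcs s bspec[OF IH s] j(1) i(2) r(1) ri] k j(2) r(2) by simp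
      qed
      have dv: "(\<not> (\<exists>k\<le>?M. da_target ?pf (run F ?pf \<sigma> k) f = Some w) \<longrightarrow>
           DA F W ?pf (\<sigma>(w := dev_list TB f (\<sigma> w))) w = DA F W ?pf \<sigma> w) \<and>
         ((\<exists>k\<le>?M. da_target ?pf (run F ?pf \<sigma> k) f = Some w) \<longrightarrow>
           (\<exists>h. DA F W ?pf (\<sigma>(w := dev_list TB f (\<sigma> w))) w = Some h \<and> (h \<in> set TB \<or> h = f)))"
        using dev_outcome[OF fF fTB wW noB] .
      have notB: "x \<notin> B" if x: "?mu w = Some x" for x
      proof
        assume "x \<in> B"
        then obtain j where j: "j \<in> {1..<i}" "x = oF s j" using B1 s by blast
        have "?mu (oW s j) = Some x" using IHs[of j] j by auto
        then have "oW s j = w" using x mm unfolding is_matching_def by blast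
        then have e: "oW s j = oW s r" using r(2) by simp
        have "j \<in> {1..card W}" using j i by auto
        then have "j = r" using bij_inj_eq[OF bW _ r(1) e] by blast
        then show False using j ri by auto
      qed
      have lef: "wutil uw w (?mu w) \<le> uw w f"
      proof (cases "?mu w")
        case None then show ?thesis using uw_pos wW fF by (simp add: wutil_def less_imp_le)
      next
        case (Some x)
        have "x \<in> F" using Some mm by (auto simp: is_matching_def)
        then show ?thesis using notB[OF Some] Some by (auto simp: B_def wutil_def)
      qed
      have ltf: "wutil uw w (?mu w) < uw w f" if nf: "?mu w \<noteq> Some f"
      proof (cases "?mu w")
        case None then show ?thesis using uw_pos wW fF by (simp add: wutil_def)
      next
        case (Some x)
        have xF: "x \<in> F" using Some mm by (auto simp: is_matching_def)
        have "x \<noteq> f" using Some nf by simp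
        then have "uw w x \<noteq> uw w f" using uw_strict wW xF fF unfolding inj_on_def by blast
        then show ?thesis using notB[OF Some] Some xF by (auto simp: B_def wutil_def)
      qed
      have geq: "wutil uw w (?mu' w) \<ge> uw w f" if ex: "\<exists>k\<le>?M. da_target ?pf (run F ?pf \<sigma> k) f = Some w"
      proof -
        have "\<exists>h. DA F W ?pf (\<sigma>(w := dev_list TB f (\<sigma> w))) w = Some h \<and> (h \<in> set TB \<or> h = f)"
          using dv ex by (rule conjunct2[THEN mp])
        then obtain h where h: "DA F W ?pf (\<sigma>(w := dev_list TB f (\<sigma> w))) w = Some h" "h \<in> set TB \<or> h = f"
          by blast
        have h1: "?mu' w = Some h" using h(1) unfolding out_eq L_def .
        have "uw w h \<ge> uw w f"
        proof (cases "h \<in> set TB")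
          case True then have "h \<in> B" using setTB by simp
          then show ?thesis by (simp add: B_def)
        next
          case False then show ?thesis using h(2) by simp
        qed
        then show ?thesis using h1 by (simp add: wutil_def)
      qed
      have weak: "wutil uw w (?mu w) \<le> wutil uw w (?mu' w)"
      proof (cases "\<exists>k\<le>?M. da_target ?pf (run F ?pf \<sigma> k) f = Some w")
        case True
        have "uw w f \<le> wutil uw w (?mu' w)" using geq[OF True] .
        then show ?thesis using lef by linarith
      next
        case False
        have "DA F W ?pf (\<sigma>(w := dev_list TB f (\<sigma> w))) w = DA F W ?pf \<sigma> w"
          using dv False by (rule conjunct1[THEN mp])
        then have "?mu' w = ?mu w" unfolding out_eq L_def .
        then show ?thesis by simp
      qed
      have strict: "wutil uw w (?mu w) < wutil uw w (?mu' w)" if st: "s = \<theta>"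
      proof -
        have fix\<theta>: "da_step F ?pf \<sigma> (run F ?pf \<sigma> ?M) = run F ?pf \<sigma> ?M"
          using run_fixpoint[OF finF finW] pfW by auto
        have "(f, w) \<in> run F ?pf \<sigma> ?M"
        proof (cases "da_target ?pf (run F ?pf \<sigma> ?M) f")
          case None then show ?thesis using target_NoneD[OF None] pfW fF wW by auto
        next
          case (Some t)
          have tW: "t \<in> W" using target_SomeD[OF Some] pfW fF by auto
          have "da_held F ?pf \<sigma> (run F ?pf \<sigma> ?M) t = Some f" using fix_target_held[OF fix\<theta> fF Some] .
          then have mt: "?mu t = Some f" using tW by (simp add: out_eq DA_eq)
          then have "t \<noteq> w" using ne st by auto
          obtain r' where r': "r' \<in> {1..card W}" "oW s r' = t" using bij_surj[OF bW tW] by blast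
          have "\<not> r' < i"
          proof
            assume "r' < i"
            then have "?mu (oW s r') = Some (oF s r')" using IHs[of r'] r' by auto
            then have "oF \<theta> r' = oF \<theta> i" using mt r' st by (simp add: f_def)
            moreover have "r' \<in> {1..card F}" using \<open>r' < i\<close> iF r' by auto
            ultimately have "r' = i" using bij_inj_eq[OF bF\<theta> _ iF] by blast
            then show False using \<open>r' < i\<close> by simp
          qed
          then have "r' \<in> {i..card W}" using r' by auto
          moreover have "oW \<theta> r' \<noteq> oW \<theta> i" using \<open>t \<noteq> w\<close> r' st by (simp add: w_def)
          moreover have "top_top (uf \<theta>) uw (oF \<theta> ` {i..card F}) (oW \<theta> ` {i..card W}) (oF \<theta> i) (oW \<theta> i)"
            using SPC_facts(3)[OF spc\<theta>] i by auto
          ultimately have "uf \<theta> (oF \<theta> i) (oW \<theta> r') < uf \<theta> (oF \<theta> i) (oW \<theta> i)"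
            unfolding top_top_def by blast
          then have "uf \<theta> f t < uf \<theta> f w" using r'(2) st by (simp add: f_def w_def)
          then have "idx (?pf f) w < idx (?pf f) t"
            using rank_list_idx[OF finW, of "uf s f" w t] ufi fF wW tW st by simp
          then show ?thesis using target_SomeD[OF Some] pfW fF wW by auto
        qed
        then obtain k where "k < ?M" "da_target ?pf (run F ?pf \<sigma> k) f = Some w"
          using rej_proposed[of f w F ?pf \<sigma> ?M] by blast
        then have "\<exists>k\<le>?M. da_target ?pf (run F ?pf \<sigma> k) f = Some w" by (meson less_imp_le)
        then have "wutil uw w (?mu' w) \<ge> uw w f" by (rule geq)
        moreover have "wutil uw w (?mu w) < uw w f" using ltf ne st by blast
        ultimately show ?thesis by linarith
      qed
      show ?thesis using weak strict by blast
    qed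
  qed
  have le: "\<forall>s\<in>\<Theta>. wutil uw w (out s \<sigma> w) \<le> wutil uw w (out s (\<sigma>(w := L)) w)" using cmp by blast
  have "EU \<sigma> w < EU (\<sigma>(w := L)) w" using EU_less[OF le th] cmp[OF th] by blast
  moreover have "EU (\<sigma>(w := L)) w \<le> EU \<sigma> w" using bne vL wW unfolding is_BNE_def by blast
  ultimately show False by simp
qed

lemma spc_star_pairs:
  assumes spc: "\<forall>\<theta>\<in>\<Theta>. SPC_orderings F W (uf \<theta>) uw (oF \<theta>) (oW \<theta>)"
    and star: "\<forall>\<theta>\<in>\<Theta>. \<forall>i\<in>{1..min (card F) (card W)}. \<forall>f\<in>F.
           uw (oW \<theta> i) f > uw (oW \<theta> i) (oF \<theta> i) \<longrightarrow>
           (\<forall>\<theta>'\<in>\<Theta>. \<exists>i'\<in>{1..<i}. f = oF \<theta>' i')"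
    and bne: "is_BNE F W uf uw \<Theta> \<Psi> \<sigma>"
  shows "\<forall>\<theta>\<in>\<Theta>. \<forall>j. 1 \<le> j \<longrightarrow> j < i \<longrightarrow> j \<le> min (card F) (card W) \<longrightarrow> out \<theta> \<sigma> (oW \<theta> j) = Some (oF \<theta> j)"
proof (induction i)
  case 0 then show ?case by simp
next
  case (Suc i)
  show ?case
  proof (intro ballI allI impI)
    fix \<theta> j assume th: "\<theta> \<in> \<Theta>" and j: "1 \<le> j" "j < Suc i" "j \<le> min (card F) (card W)"
    show "out \<theta> \<sigma> (oW \<theta> j) = Some (oF \<theta> j)"
    proof (cases "j < i")
      case True show ?thesis by (rule Suc.IH[rule_format, OF th j(1) True j(3)])
    next
      case False
      then have ji: "j = i" using j by simp
      have i1: "1 \<le> i" "i \<le> min (card F) (card W)" using j ji by auto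
      show ?thesis using step_lemma[OF spc star bne Suc.IH i1 th] ji by simp
    qed
  qed
qed

lemma main:
  assumes unique_stable: "\<forall>\<theta>\<in>\<Theta>. \<exists>!\<mu>. stable_matching F W (uf \<theta>) uw \<mu>"
    and cond: "assortative_firms F W uf \<Theta> \<or> SPC_star F W uf uw \<Theta>"
  shows "(\<exists>\<sigma>. is_BNE F W uf uw \<Theta> \<Psi> \<sigma>) \<and>
         (\<forall>\<sigma>. is_BNE F W uf uw \<Theta> \<Psi> \<sigma> \<longrightarrow>
            (\<forall>\<theta>\<in>\<Theta>. game_outcome F W uf \<theta> \<sigma> = (THE \<mu>. stable_matching F W (uf \<theta>) uw \<mu>)))"
  using cond
proof
  assume as: "assortative_firms F W uf \<Theta>"
  show ?thesis
  proof (intro conjI allI impI ballI)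
    show "\<exists>\<sigma>. is_BNE F W uf uw \<Theta> \<Psi> \<sigma>" using BNE_T_assort[OF as] by blast
  next
    fix \<sigma> \<theta> assume bne: "is_BNE F W uf uw \<Theta> \<Psi> \<sigma>" and th: "\<theta> \<in> \<Theta>"
    have "stable_matching F W (uf \<theta>) uw (out \<theta> \<sigma>)" using assort_unique[OF as bne th] .
    moreover have "\<exists>!\<mu>. stable_matching F W (uf \<theta>) uw \<mu>" using bspec[OF unique_stable th] .
    ultimately show "out \<theta> \<sigma> = (THE \<mu>. stable_matching F W (uf \<theta>) uw \<mu>)"
      by (simp add: the1_equality)
  qed
next
  assume "SPC_star F W uf uw \<Theta>"
  then obtain oF oW where spc: "\<forall>\<theta>\<in>\<Theta>. SPC_orderings F W (uf \<theta>) uw (oF \<theta>) (oW \<theta>)"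
    and star: "\<forall>\<theta>\<in>\<Theta>. \<forall>i\<in>{1..min (card F) (card W)}. \<forall>f\<in>F.
           uw (oW \<theta> i) f > uw (oW \<theta> i) (oF \<theta> i) \<longrightarrow>
           (\<forall>\<theta>'\<in>\<Theta>. \<exists>i'\<in>{1..<i}. f = oF \<theta>' i')"
    unfolding SPC_star_def by blast
  show ?thesis
  proof (intro conjI allI impI ballI)
    show "\<exists>\<sigma>. is_BNE F W uf uw \<Theta> \<Psi> \<sigma>" using BNE_T_SPC[OF spc] by blast
  next
    fix \<sigma> \<theta> assume bne: "is_BNE F W uf uw \<Theta> \<Psi> \<sigma>" and th: "\<theta> \<in> \<Theta>"
    let ?K = "min (card F) (card W)"
    let ?nu = "THE \<mu>. stable_matching F W (uf \<theta>) uw \<mu>"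
    have spc\<theta>: "SPC_orderings F W (uf \<theta>) uw (oF \<theta>) (oW \<theta>)" using spc th by blast
    have ufp: "\<forall>f\<in>F. \<forall>w\<in>W. uf \<theta> f w > 0" using uf_pos th by blast
    have ufi: "\<forall>f\<in>F. inj_on (uf \<theta> f) W" using uf_strict th by blast
    have ex1: "\<exists>!\<mu>. stable_matching F W (uf \<theta>) uw \<mu>" using bspec[OF unique_stable th] .
    have st: "stable_matching F W (uf \<theta>) uw ?nu" using theI'[OF ex1] .
    have rs: "rstable F W (uf \<theta>) T ?nu" using stable_rstable_T[OF finF uw_strict uw_pos st] .
    have p1: "\<forall>j. 1 \<le> j \<longrightarrow> j \<le> ?K \<longrightarrow> ?nu (oW \<theta> j) = Some (oF \<theta> j)"
    proof (intro allI impI)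
      fix j assume j: "1 \<le> j" "j \<le> ?K"
      have g: "\<forall>j. 1 \<le> j \<longrightarrow> j < Suc ?K \<longrightarrow> j \<le> ?K \<longrightarrow>
        oF \<theta> j \<in> set (T (oW \<theta> j)) \<and>
        (\<forall>h\<in>set (T (oW \<theta> j)). idx (T (oW \<theta> j)) h < idx (T (oW \<theta> j)) (oF \<theta> j) \<longrightarrow> h \<in> oF \<theta> ` {1..<j})"
        using truthful_good[OF spc\<theta> finF uw_strict] by blast
      show "?nu (oW \<theta> j) = Some (oF \<theta> j)" using pairs_lemma[OF spc\<theta> ufp rs g] j by simp
    qed
    have p2: "\<forall>j. 1 \<le> j \<longrightarrow> j \<le> ?K \<longrightarrow> out \<theta> \<sigma> (oW \<theta> j) = Some (oF \<theta> j)"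
    proof (intro allI impI)
      fix j assume j: "1 \<le> j" "j \<le> ?K"
      show "out \<theta> \<sigma> (oW \<theta> j) = Some (oF \<theta> j)"
        using spc_star_pairs[OF spc star bne, of "Suc ?K", rule_format, OF th j(1) _ j(2)] j by simp
    qed
    have m1: "is_matching F W (out \<theta> \<sigma>)" unfolding out_eq by (rule DA_matching)
    have m2: "is_matching F W ?nu" using st unfolding stable_matching_def by (rule conjunct1)
    show "out \<theta> \<sigma> = ?nu" using SPC_match_eq[OF spc\<theta> m1 m2 p2 p1] .
  qed
qed

end

theorem proposition1:
  fixes F :: "'f set" and W :: "'w set" and \<Theta> :: "'s set"
    and uf :: "'s \<Rightarrow> 'f \<Rightarrow> 'w \<Rightarrow> real" and uw :: "'w \<Rightarrow> 'f \<Rightarrow> real"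
    and \<Psi> :: "'s \<Rightarrow> real"
  assumes finF: "finite F" and finW: "finite W"
    and fin\<Theta>: "finite \<Theta>" and ne\<Theta>: "\<Theta> \<noteq> {}"
    and prior_pos: "\<forall>\<theta>\<in>\<Theta>. \<Psi> \<theta> > 0" and prior_sum: "(\<Sum>\<theta>\<in>\<Theta>. \<Psi> \<theta>) = 1"
    and uf_pos: "\<forall>\<theta>\<in>\<Theta>. \<forall>f\<in>F. \<forall>w\<in>W. uf \<theta> f w > 0"
    and uw_pos: "\<forall>w\<in>W. \<forall>f\<in>F. uw w f > 0"
    and uf_strict: "\<forall>\<theta>\<in>\<Theta>. \<forall>f\<in>F. inj_on (uf \<theta> f) W"
    and uw_strict: "\<forall>w\<in>W. inj_on (uw w) F"
    and unique_stable: "\<forall>\<theta>\<in>\<Theta>. \<exists>!\<mu>. stable_matching F W (uf \<theta>) uw \<mu>"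
    and cond: "assortative_firms F W uf \<Theta> \<or> SPC_star F W uf uw \<Theta>"
  shows "(\<exists>\<sigma>. is_BNE F W uf uw \<Theta> \<Psi> \<sigma>) \<and>
         (\<forall>\<sigma>. is_BNE F W uf uw \<Theta> \<Psi> \<sigma> \<longrightarrow>
            (\<forall>\<theta>\<in>\<Theta>. game_outcome F W uf \<theta> \<sigma> = (THE \<mu>. stable_matching F W (uf \<theta>) uw \<mu>)))"
proof -
  interpret e: econ F W \<Theta> uf uw \<Psi>
    using finF finW fin\<Theta> prior_pos uf_pos uw_pos uf_strict uw_strict by unfold_locales
  show ?thesis using e.main[OF unique_stable cond] .
qed


end
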